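(* Let $q,r,\mu,\nu$ be positive integers with $q+1\le\nu\le q+r-1$. Then: (i) $\mathcal{N}^k(z)\bar{\mathcal{K}}^i(z)=0$ for all integers $i\ge k\ge0$; (ii) if $\mu\le r-1$, $\bar{\mathcal{K}}^{\mu-1}(z)$ has size $\nu r\times(\nu r-q\mu)$ and full column rank $\nu r-q\mu$, and if $\mu\ge r$, $\bar{\mathcal{K}}^{\mu-1}(z)$ has size $\nu r\times(\nu-q)r$ and full column rank $(\nu-q)r$; (iii) the kernel of $\mathcal{N}(z)$ has dimension $\nu r-q\min\{\mu,r\}$ and is spanned by the columns of $\bar{\mathcal{K}}^{\mu-1}(z)$; the rank of $\mathcal{N}(z)$ equals $q\min\{\mu,r\}<\nu r$, so $\mathcal{N}(z)$ never has full column rank.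
   Context: Matrix indices start at $0$; $'$ and $^{(j)}$ denote $z$-derivatives. $u(z)=(1,\dots,z^{q-1})^\top$, $w(z)=(1,\dots,z^{r-1})$, $M(z)=u(z)w(z)$. For $k\ge0$, $\mathcal{N}^k(z)=\frac{1}{k!}\big(\frac{1}{0!}M^{(k)}(z),\frac{1}{1!}M^{(k+1)}(z),\dots,\frac{1}{(\nu-1)!}M^{(k+\nu-1)}(z)\big)\in\mathbb{C}^{q\times\nu r}$, and $\mathcal{N}(z)\in\mathbb{C}^{\mu q\times\nu r}$ is the matrix with block rows $\mathcal{N}^0(z),\dots,\mathcal{N}^{\mu-1}(z)$. $S_n$ is the $n\times n$ shift matrix $(S_n)_{ij}=\delta_{i+1,j}$; $\ell_q$ is the last standard basis vector of $\mathbb{R}^q$, $\varphi$ the first standard basis vector of $\mathbb{R}^{\nu-q}$. $G(z)\in\mathbb{C}^{r\times r}$ has entries $G_{ij}=z^{j-i-1}$ for $j>i$, $0$ otherwise; for $0\le j\le r-1$, $G_{j0}(z)$ is the $(r-j)\times r$ matrix formed by the first $r-j$ rows of $G(z)$. For $0\le j\le r-2$, $F_j(z)\in\mathbb{C}^{(r-j)\times(r-j-1)}$ has entries $(F_j)_{ii}=-z$, $(F_j)_{i+1,i}=1$, zero otherwise. Define \[ \bar K_j(z)=\begin{pmatrix} I_q\otimes F_j(z)+S_q\otimes F_j'(z) & -(\ell_q\varphi^\top)\otimes \frac{1}{j!}G_{j0}^{(j)}(z)\\ 0 & I_{\nu-q}\otimes I_r-S_{\nu-q}\otimes G(z)\end{pmatrix}\in\mathbb{C}^{(\nu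 r-qj)\times(\nu r-q(j+1))}\quad(0\le j\le r-2), \] $\bar K_{r-1}(z)=\begin{pmatrix}0_{q\times(\nu-q)r}\\ I_{\nu-q}\otimes I_r-S_{\nu-q}\otimes G(z)\end{pmatrix}\in\mathbb{C}^{(\nu r-q(r-1))\times(\nu-q)r}$, and $\bar K_j(z)=I_{\nu-q}\otimes I_r-S_{\nu-q}\otimes G(z)$ for $j\ge r$. Finally $\bar{\mathcal{K}}^i(z)=\bar K_0(z)\bar K_1(z)\cdots\bar K_i(z)$. *)

theory Defs
  imports "HOL-Analysis.Derivative" "Jordan_Normal_Form.DL_Rank" "Jordan_Normal_Form.Matrix_Kernel"
begin

definition mat_deriv :: "nat \<Rightarrow> (complex \<Rightarrow> complex mat) \<Rightarrow> complex \<Rightarrow> complex mat" where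
  "mat_deriv k A z = mat (dim_row (A z)) (dim_col (A z))
      (\<lambda>(i,j). (deriv ^^ k) (\<lambda>w. A w $$ (i,j)) z)"

definition kron :: "complex mat \<Rightarrow> complex mat \<Rightarrow> complex mat" where
  "kron A B = mat (dim_row A * dim_row B) (dim_col A * dim_col B)
      (\<lambda>(i,j). A $$ (i div dim_row B, j div dim_col B) * B $$ (i mod dim_row B, j mod dim_col B))"

definition Mmat :: "nat \<Rightarrow> nat \<Rightarrow> complex \<Rightarrow> complex mat" where
  "Mmat q r z = mat q 1 (\<lambda>(i,_). z ^ i) * mat 1 r (\<lambda>(_,j). z ^ j)"

(* N^k(z) in C^{q x nu r}: block column l is (1/k!)(1/l!) M^{(k+l)}(z) *)
definition Nblk :: "nat \<Rightarrow> nat \<Rightarrow> nat \<Rightarrow> nat \<Rightarrow> complex \<Rightarrow> complex mat" where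
  "Nblk q r nu k z = mat q (nu * r)
      (\<lambda>(i,c). (1 / fact k) * ((1 / fact (c div r)) * mat_deriv (k + c div r) (Mmat q r) z $$ (i, c mod r)))"

(* N(z) in C^{mu q x nu r}, block rows N^0,...,N^{mu-1} *)
definition Nmat :: "nat \<Rightarrow> nat \<Rightarrow> nat \<Rightarrow> nat \<Rightarrow> complex \<Rightarrow> complex mat" where
  "Nmat q r mu nu z = mat (mu * q) (nu * r) (\<lambda>(i,c). Nblk q r nu (i div q) z $$ (i mod q, c))"

definition shiftm :: "nat \<Rightarrow> complex mat" where
  "shiftm n = mat n n (\<lambda>(i,j). if i + 1 = j then 1 else 0)"

definition lvec :: "nat \<Rightarrow> complex mat" where
  "lvec q = mat q 1 (\<lambda>(i,_). if i = q - 1 then 1 else 0)"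

definition phivec :: "nat \<Rightarrow> complex mat" where
  "phivec m = mat m 1 (\<lambda>(i,_). if i = 0 then 1 else 0)"

definition Gmat :: "nat \<Rightarrow> complex \<Rightarrow> complex mat" where
  "Gmat r z = mat r r (\<lambda>(i,j). if j > i then z ^ (j - i - 1) else 0)"

definition Gj0 :: "nat \<Rightarrow> nat \<Rightarrow> complex \<Rightarrow> complex mat" where
  "Gj0 r j z = mat (r - j) r (\<lambda>(i,k). Gmat r z $$ (i,k))"

definition Fmat :: "nat \<Rightarrow> nat \<Rightarrow> complex \<Rightarrow> complex mat" where
  "Fmat r j z = mat (r - j) (r - j - 1)
      (\<lambda>(i,k). if i = k then - z else if i = k + 1 then 1 else 0)"

definition Kbot :: "nat \<Rightarrow> nat \<Rightarrow> nat \<Rightarrow> complex \<Rightarrow> complex mat" where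
  "Kbot q r nu z = kron (1\<^sub>m (nu - q)) (1\<^sub>m r) - kron (shiftm (nu - q)) (Gmat r z)"

definition Kbar :: "nat \<Rightarrow> nat \<Rightarrow> nat \<Rightarrow> nat \<Rightarrow> complex \<Rightarrow> complex mat" where
  "Kbar q r nu j z =
    (if j + 2 \<le> r then
       four_block_mat
         (kron (1\<^sub>m q) (Fmat r j z) + kron (shiftm q) (mat_deriv 1 (Fmat r j) z))
         (- kron (lvec q * (phivec (nu - q))\<^sup>T) ((1 / fact j) \<cdot>\<^sub>m mat_deriv j (Gj0 r j) z))
         (0\<^sub>m ((nu - q) * r) (q * (r - j - 1)))
         (Kbot q r nu z)
     else if j = r - 1 then
       four_block_mat (0\<^sub>m q 0) (0\<^sub>m q ((nu - q) * r)) (0\<^sub>m ((nu - q) * r) 0) (Kbot q r nu z)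
     else Kbot q r nu z)"

primrec Kprod :: "nat \<Rightarrow> nat \<Rightarrow> nat \<Rightarrow> nat \<Rightarrow> complex \<Rightarrow> complex mat" where
  "Kprod q r nu 0 z = Kbar q r nu 0 z"
| "Kprod q r nu (Suc i) z = Kprod q r nu i z * Kbar q r nu (Suc i) z"

end

theory Submission
  imports Defs
begin


lemma blk_less: "l < (a::nat) \<Longrightarrow> t < b \<Longrightarrow> l*b+t < a*b"
proof -
  assume "l < a" "t < b"
  then have "l*b+t < Suc l * b" by simp
  also have "\<dots> \<le> a*b" using \<open>l<a\<close> by (intro mult_right_mono) auto
  finally show ?thesis .
qed

lemma mat_deriv_dims[simp]: "dim_row (mat_deriv k A z) = dim_row (A z)" "dim_col (mat_deriv k A z) = dim_col (A z)"
  by (simp_all add: mat_deriv_def)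
lemma mat_deriv_index: "i < dim_row (A z) \<Longrightarrow> j < dim_col (A z) \<Longrightarrow>
   mat_deriv k A z $$ (i,j) = (deriv ^^ k) (\<lambda>w. A w $$ (i,j)) z"
  by (simp add: mat_deriv_def)

lemma deriv_const_iter: "(deriv ^^ k) (\<lambda>w::complex. c) = (\<lambda>w. if k = 0 then c else 0)"
proof (induction k)
  case 0 then show ?case by simp
next
  case (Suc k)
  have "deriv (\<lambda>w::complex. if k = 0 then c else 0) = (\<lambda>w. 0)"
    by (rule ext, rule DERIV_imp_deriv, auto intro!: derivative_eq_intros)
  then show ?case using Suc by simp
qed

lemma kron_dims[simp]: "dim_row (kron A B) = dim_row A * dim_row B" "dim_col (kron A B) = dim_col A * dim_col B"
  by (simp_all add: kron_def)
lemma kron_index: "i < dim_row A * dim_row B \<Longrightarrow> j < dim_col A * dim_col B \<Longrightarrow>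
  kron A B $$ (i,j) = A $$ (i div dim_row B, j div dim_col B) * B $$ (i mod dim_row B, j mod dim_col B)"
  by (simp add: kron_def)

lemma Fmat_dims[simp]: "dim_row (Fmat r j z) = r - j" "dim_col (Fmat r j z) = r - j - 1"
  by (simp_all add: Fmat_def)
lemma Gj0_dims[simp]: "dim_row (Gj0 r j z) = r - j" "dim_col (Gj0 r j z) = r"
  by (simp_all add: Gj0_def)
lemma Gmat_dims[simp]: "dim_row (Gmat r z) = r" "dim_col (Gmat r z) = r"
  by (simp_all add: Gmat_def)
lemma shiftm_dims[simp]: "dim_row (shiftm n) = n" "dim_col (shiftm n) = n"
  by (simp_all add: shiftm_def)
lemma lvec_dims[simp]: "dim_row (lvec n) = n" "dim_col (lvec n) = 1"
  by (simp_all add: lvec_def)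
lemma phivec_dims[simp]: "dim_row (phivec n) = n" "dim_col (phivec n) = 1"
  by (simp_all add: phivec_def)
lemma Kbot_dims[simp]: "dim_row (Kbot q r nu z) = (nu-q)*r" "dim_col (Kbot q r nu z) = (nu-q)*r"
  by (simp_all add: Kbot_def)

lemma Kbot_index:
  assumes "m < nu - q" "t < r" "m' < nu - q" "s < r"
  shows "Kbot q r nu z $$ (m*r+t, m'*r+s) = (if m = m' \<and> t = s then 1 else 0) - (if m+1 = m' \<and> t < s then z^(s-t-1) else 0)"
proof -
  have p: "m*r+t < (nu-q)*r" "m'*r+s < (nu-q)*r" using assms blk_less by auto
  show ?thesis using assms p
    by (simp add: Kbot_def kron_index shiftm_def Gmat_def)
qed

lemma deriv_neg_id: "deriv (\<lambda>w::complex. - w) z = -1"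
  by (rule DERIV_imp_deriv, auto intro!: derivative_eq_intros)
lemma deriv_const': "deriv (\<lambda>w::complex. c) z = 0"
  by (rule DERIV_imp_deriv, auto intro!: derivative_eq_intros)

lemma Fd_index: assumes "t < r - j" "s < r - j - 1"
  shows "mat_deriv 1 (Fmat r j) z $$ (t,s) = (if t = s then -1 else 0)"
proof -
  have "mat_deriv 1 (Fmat r j) z $$ (t,s) = deriv (\<lambda>w. Fmat r j w $$ (t,s)) z"
    using assms by (simp add: mat_deriv_index)
  also have "(\<lambda>w. Fmat r j w $$ (t,s)) = (\<lambda>w. if t = s then -w else if t = s+1 then 1 else 0)"
    using assms by (auto simp: Fmat_def)
  finally show ?thesis by (auto simp: deriv_neg_id deriv_const')
qed

definition zt :: "complex \<Rightarrow> nat \<Rightarrow> nat \<Rightarrow> complex" where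
  "zt z m a = of_nat (a choose m) * z ^ (a - m)"

lemma zt_less: "a < m \<Longrightarrow> zt z m a = 0" by (simp add: zt_def)
lemma zt_same[simp]: "zt z m m = 1" by (simp add: zt_def)
lemma zt_0: "zt z 0 a = z ^ a" by (simp add: zt_def)
lemma zt_Suc0: "zt z 0 (Suc a) = z * zt z 0 a" by (simp add: zt_def)
lemma zt_SucSuc: "zt z (Suc m) (Suc a) = z * zt z (Suc m) a + zt z m a"
proof (cases "a < m")
  case True then show ?thesis by (simp add: zt_def)
next
  case False
  show ?thesis
  proof (cases "a = m")
    case True then show ?thesis by (simp add: zt_def)
  next
    case False
    with \<open>\<not> a < m\<close> have "a \<ge> Suc m" by simp
    then have e: "Suc a - Suc m = Suc (a - Suc m)" "a - m = Suc (a - Suc m)" by auto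
    show ?thesis unfolding zt_def e by (simp add: algebra_simps)
  qed
qed

lemma deriv_pow_iter: "(deriv ^^ n) (\<lambda>w. w ^ a) = (\<lambda>w. fact n * zt w n a)"
proof (induction n)
  case 0 then show ?case by (simp add: zt_def)
next
  case (Suc n)
  have "(deriv ^^ Suc n) (\<lambda>w. w ^ a) = deriv (\<lambda>w. fact n * zt w n a)" using Suc by simp
  also have "\<dots> = (\<lambda>w. fact (Suc n) * zt w (Suc n) a)"
  proof
    fix w :: complex
    have d: "((\<lambda>w. fact n * zt w n a) has_field_derivative
        (fact n * of_nat (a choose n) * (of_nat (a - n) * w ^ (a - n - 1)))) (at w)"
      unfolding zt_def
      by (auto intro!: derivative_eq_intros simp: algebra_simps)
    have "fact n * of_nat (a choose n) * (of_nat (a - n) * w ^ (a - n - 1)) = fact (Suc n) * zt w (Suc n) a"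
    proof -
      have "(a choose n) * (a - n) = (a choose Suc n) * Suc n"
        by (metis binomial_absorb_comp binomial_absorption mult.commute)
      then have "(of_nat (a choose n) * of_nat (a - n) :: complex) = of_nat (a choose Suc n) * of_nat (Suc n)"
        by (metis of_nat_mult)
      then have "fact n * of_nat (a choose n) * (of_nat (a - n) * w ^ (a - n - 1))
          = fact n * (of_nat (a choose Suc n) * of_nat (Suc n)) * w ^ (a - Suc n)"
        by (simp add: mult_ac)
      also have "\<dots> = fact (Suc n) * zt w (Suc n) a" unfolding zt_def fact_Suc by (simp add: mult_ac)
      finally show ?thesis .
    qed
    then show "deriv (\<lambda>w. fact n * zt w n a) w = fact (Suc n) * zt w (Suc n) a"
      using DERIV_imp_deriv[OF d] by simp
  qed
  finally show ?case .
qed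


lemma Gd_index: assumes "t < r - j" "s < r"
  shows "mat_deriv j (Gj0 r j) z $$ (t,s) = (if t < s then fact j * zt z j (s-t-1) else 0)"
proof -
  have "mat_deriv j (Gj0 r j) z $$ (t,s) = (deriv ^^ j) (\<lambda>w. Gj0 r j w $$ (t,s)) z"
    using assms by (simp add: mat_deriv_index)
  also have "(\<lambda>w. Gj0 r j w $$ (t,s)) = (if t < s then (\<lambda>w. w^(s-t-1)) else (\<lambda>w. 0))"
    using assms by (auto simp: Gj0_def Gmat_def)
  finally show ?thesis using assms by (auto simp: deriv_pow_iter deriv_const_iter)
qed

lemma Kbar_TT:
  assumes "j + 2 \<le> r" "l < q" "t < r - j" "l' < q" "s < r - Suc j"
  shows "Kbar q r nu j z $$ (l*(r-j)+t, l'*(r - Suc j)+s) =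
     (if l = l' then (if t = s then -z else if t = s+1 then 1 else 0) else 0) + (if l+1 = l' \<and> t = s then -1 else 0)"
proof -
  have p: "l*(r-j)+t < q*(r-j)" "l'*(r - Suc j)+s < q*(r - Suc j)" using assms blk_less by auto
  show ?thesis using assms p
    by (simp add: Kbar_def index_mat_four_block kron_index Fd_index[unfolded One_nat_def] shiftm_def Fmat_def)
qed

lemma Kbar_TB:
  assumes "j + 2 \<le> r" "l < q" "t < r - j" "m' < nu - q" "s < r"
  shows "Kbar q r nu j z $$ (l*(r-j)+t, q*(r - Suc j)+(m'*r+s)) =
     (if l = q - 1 \<and> m' = 0 \<and> t < s then - zt z j (s-t-1) else 0)"
proof -
  have p: "l*(r-j)+t < q*(r-j)" "m'*r+s < (nu-q)*r" using assms blk_less by auto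
  show ?thesis using assms p
    by (simp add: Kbar_def index_mat_four_block kron_index Gd_index lvec_def phivec_def scalar_prod_def)
qed

lemma Kbar_BT:
  assumes "j + 2 \<le> r" "m < nu - q" "t < r" "l' < q" "s < r - Suc j"
  shows "Kbar q r nu j z $$ (q*(r-j)+(m*r+t), l'*(r - Suc j)+s) = 0"
proof -
  have p: "m*r+t < (nu-q)*r" "l'*(r - Suc j)+s < q*(r - Suc j)" using assms blk_less by auto
  show ?thesis using assms p
    by (simp add: Kbar_def index_mat_four_block)
qed

lemma Kbar_BB:
  assumes "j + 2 \<le> r" "m < nu - q" "t < r" "m' < nu - q" "s < r"
  shows "Kbar q r nu j z $$ (q*(r-j)+(m*r+t), q*(r - Suc j)+(m'*r+s)) =
     (if m = m' \<and> t = s then 1 else 0) - (if m+1 = m' \<and> t < s then z^(s-t-1) else 0)"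
proof -
  have p: "m*r+t < (nu-q)*r" "m'*r+s < (nu-q)*r" using assms blk_less by auto
  show ?thesis using assms p
    by (simp add: Kbar_def index_mat_four_block Kbot_index)
qed

lemma sum_add_split: fixes f :: "nat \<Rightarrow> 'a::comm_monoid_add"
  shows "(\<Sum>p<a+b. f p) = (\<Sum>p<a. f p) + (\<Sum>p<b. f (a+p))"
  by (induction b) (simp_all add: add.assoc)

lemma mult_index_sum: assumes "A \<in> carrier_mat nr n" "B \<in> carrier_mat n nc" "i < nr" "c < nc"
  shows "(A * B) $$ (i,c) = (\<Sum>p<n. A $$ (i,p) * B $$ (p,c))"
  using assms by (auto simp: scalar_prod_def atLeast0LessThan intro!: sum.cong)

definition Vd :: "nat \<Rightarrow> nat \<Rightarrow> nat \<Rightarrow> nat \<Rightarrow> nat" where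
  "Vd q r nu j = q*(r-j) + (nu-q)*r"

definition Phi :: "nat \<Rightarrow> nat \<Rightarrow> nat \<Rightarrow> nat \<Rightarrow> nat \<Rightarrow> complex \<Rightarrow> complex mat" where
  "Phi q r nu j k z = mat q (Vd q r nu j) (\<lambda>(i,c).
     if c < q*(r-j) then of_nat ((k-j + c div (r-j)) choose (c div (r-j))) * zt z (k-j + c div (r-j)) (i + c mod (r-j))
     else of_nat ((k-j + (q + (c - q*(r-j)) div r)) choose (q + (c - q*(r-j)) div r))
          * zt z (k + (q + (c - q*(r-j)) div r)) (i + (c - q*(r-j)) mod r))"

lemma Phi_carrier: "Phi q r nu j k z \<in> carrier_mat q (Vd q r nu j)" by (simp add: Phi_def)

lemma Phi_top: assumes "i < q" "l < q" "t < r - j"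
  shows "Phi q r nu j k z $$ (i, l*(r-j)+t) = of_nat ((k-j+l) choose l) * zt z (k-j+l) (i+t)"
proof -
  have p: "l*(r-j)+t < q*(r-j)" using assms blk_less by auto
  then show ?thesis using assms by (simp add: Phi_def Vd_def)
qed

lemma Phi_bot: assumes "i < q" "m < nu - q" "t < r"
  shows "Phi q r nu j k z $$ (i, q*(r-j)+(m*r+t)) = of_nat ((k-j+(q+m)) choose (q+m)) * zt z (k+(q+m)) (i+t)"
proof -
  have p: "m*r+t < (nu-q)*r" using assms blk_less by auto
  then show ?thesis using assms by (simp add: Phi_def Vd_def)
qed

lemma Mmat_index: "i < q \<Longrightarrow> t < r \<Longrightarrow> Mmat q r w $$ (i,t) = w^(i+t)"
  by (simp add: Mmat_def scalar_prod_def power_add)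

lemma Nblk_index: assumes "i < q" "l < nu" "t < r"
  shows "Nblk q r nu k z $$ (i, l*r+t) = of_nat ((k+l) choose l) * zt z (k+l) (i+t)"
proof -
  have p: "l*r+t < nu*r" using assms blk_less by auto
  have "mat_deriv (k+l) (Mmat q r) z $$ (i,t) = (deriv ^^ (k+l)) (\<lambda>w. Mmat q r w $$ (i,t)) z"
    using assms by (simp add: mat_deriv_index Mmat_def)
  also have "(\<lambda>w. Mmat q r w $$ (i,t)) = (\<lambda>w. w^(i+t))" using assms by (simp add: Mmat_index)
  finally have d: "mat_deriv (k+l) (Mmat q r) z $$ (i,t) = fact (k+l) * zt z (k+l) (i+t)"
    by (simp add: deriv_pow_iter)
  have b: "(of_nat ((k+l) choose l) :: complex) = fact (k+l) / (fact l * fact k)"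
    using binomial_fact[of l "k+l"] by simp
  show ?thesis using assms p d b by (simp add: Nblk_def field_simps)
qed

lemma Phi0: assumes "r > 0" "q \<le> nu" shows "Phi q r nu 0 k z = Nblk q r nu k z"
proof (rule eq_matI)
  show "dim_row (Phi q r nu 0 k z) = dim_row (Nblk q r nu k z)" by (simp add: Phi_def Nblk_def)
  show "dim_col (Phi q r nu 0 k z) = dim_col (Nblk q r nu k z)"
    using assms by (simp add: Phi_def Nblk_def Vd_def algebra_simps)
  fix i c assume i: "i < dim_row (Nblk q r nu k z)" and c: "c < dim_col (Nblk q r nu k z)"
  then have i': "i < q" and c': "c < nu * r" by (auto simp: Nblk_def)
  have cd: "c = (c div r) * r + c mod r" by simp
  have l: "c div r < nu" using c' by (simp add: less_mult_imp_div_less)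
  show "Phi q r nu 0 k z $$ (i,c) = Nblk q r nu k z $$ (i,c)"
  proof (cases "c < q*r")
    case True
    then show ?thesis using i' c' assms Nblk_index[OF i' l, where t="c mod r" and r=r and k=k and z=z] cd
      by (simp add: Phi_def Vd_def algebra_simps)
  next
    case False
    define m where "m = c div r - q"
    have qd: "q \<le> c div r"
    proof (rule ccontr)
      assume "\<not> q \<le> c div r"
      then have "c div r + 1 \<le> q" by simp
      then have "(c div r + 1) * r \<le> q * r" by (rule mult_right_mono) simp
      moreover have "c < (c div r + 1) * r" using assms(1)
        by (metis add.commute cd mod_less_divisor mult_Suc nat_add_left_cancel_less plus_1_eq_Suc)
      ultimately show False using False by simp
    qed
    have m: "m < nu - q" using l qd m_def by simp
    have mr: "m*r + q*r = (c div r)*r" using qd unfolding m_def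
      by (metis add_mult_distrib le_add_diff_inverse2)
    have ce: "c = q*r + (m*r + c mod r)" using mr div_mult_mod_eq[of c r] by linarith
    have "Phi q r nu 0 k z $$ (i,c) = of_nat ((k+(q+m)) choose (q+m)) * zt z (k+(q+m)) (i+c mod r)"
      using Phi_bot[OF i' m, where t="c mod r" and r=r and j=0 and k=k and z=z] assms ce by simp
    also have "\<dots> = Nblk q r nu k z $$ (i,c)"
      using Nblk_index[OF i' l, where t="c mod r" and r=r and k=k and z=z] assms m_def qd by simp
    finally show ?thesis .
  qed
qed

lemma zt_conv0: assumes "i \<le> A"
  shows "(\<Sum>t<s. zt z A (i+t) * zt z 0 (s-t-1)) = zt z (Suc A) (i+s)"
proof (induction s)
  case 0 then show ?case using assms by (simp add: zt_less)
next
  case (Suc s)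
  have a: "(\<Sum>t<Suc s. zt z A (i+t) * zt z 0 (Suc s-t-1)) = (\<Sum>t<s. zt z A (i+t) * zt z 0 (Suc s-t-1)) + zt z A (i+s)"
    by (simp add: zt_0)
  have b: "(\<Sum>t<s. zt z A (i+t) * zt z 0 (Suc s-t-1)) = z * (\<Sum>t<s. zt z A (i+t) * zt z 0 (s-t-1))"
    unfolding sum_distrib_left
  proof (rule sum.cong[OF refl])
    fix t assume "t \<in> {..<s}"
    then have "Suc s - t - 1 = Suc (s - t - 1)" by auto
    then show "zt z A (i+t) * zt z 0 (Suc s-t-1) = z * (zt z A (i+t) * zt z 0 (s-t-1))"
      by (simp add: zt_0)
  qed
  have c: "zt z (Suc A) (Suc (i+s)) = z * zt z (Suc A) (i+s) + zt z A (i+s)" by (rule zt_SucSuc)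
  show ?case unfolding a b Suc.IH using c by simp
qed

lemma zt_conv_step: assumes "i \<le> A"
  and H: "\<And>s. (\<Sum>t<s. zt z A (i+t) * zt z j (s-t-1)) = zt z (A+j+1) (i+s)"
  shows "(\<Sum>t<s. zt z A (i+t) * zt z (Suc j) (s-t-1)) = zt z (A+Suc j+1) (i+s)"
proof (induction s)
  case 0 then show ?case using assms by (simp add: zt_less)
next
  case (Suc s)
  have a: "(\<Sum>t<Suc s. zt z A (i+t) * zt z (Suc j) (Suc s-t-1)) = (\<Sum>t<s. zt z A (i+t) * zt z (Suc j) (Suc s-t-1))"
    by (simp add: zt_less)
  have b: "(\<Sum>t<s. zt z A (i+t) * zt z (Suc j) (Suc s-t-1)) =
      z * (\<Sum>t<s. zt z A (i+t) * zt z (Suc j) (s-t-1)) + (\<Sum>t<s. zt z A (i+t) * zt z j (s-t-1))"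
    unfolding sum_distrib_left sum.distrib[symmetric]
  proof (rule sum.cong[OF refl])
    fix t assume "t \<in> {..<s}"
    then have e: "Suc s - t - 1 = Suc (s - t - 1)" by auto
    have "zt z (Suc j) (Suc s-t-1) = z * zt z (Suc j) (s-t-1) + zt z j (s-t-1)"
      unfolding e by (rule zt_SucSuc)
    then show "zt z A (i+t) * zt z (Suc j) (Suc s-t-1) = z * (zt z A (i+t) * zt z (Suc j) (s-t-1)) + zt z A (i+t) * zt z j (s-t-1)"
      by (simp add: algebra_simps)
  qed
  have c: "zt z (Suc (A + Suc j)) (Suc (i+s)) = z * zt z (Suc (A+Suc j)) (i+s) + zt z (A + Suc j) (i+s)" by (rule zt_SucSuc)
  show ?case unfolding a b Suc.IH H using c by simp
qed

lemma zt_conv: assumes "i \<le> A"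
  shows "(\<Sum>t<s. zt z A (i+t) * zt z j (s-t-1)) = zt z (A+j+1) (i+s)"
proof (induction j arbitrary: s)
  case 0 then show ?case using zt_conv0[OF assms] by simp
next
  case (Suc j) then show ?case using zt_conv_step[OF assms] by blast
qed

lemma S1: "of_nat ((n+l) choose l) * zt z (n+l) a * (-z) + of_nat ((n+l) choose l) * zt z (n+l) (Suc a)
   + (if 0 < l then - (of_nat ((n+(l-1)) choose (l-1)) * zt z (n+(l-1)) a) else 0)
   = (if n = 0 then 0 else of_nat ((n-1+l) choose l) * zt z (n-1+l) a)"
proof (cases "n + l")
  case 0 then show ?thesis by (simp add: zt_Suc0)
next
  case (Suc M)
  have e: "zt z (n+l) (Suc a) = z * zt z (n+l) a + zt z M a" using zt_SucSuc[of z M a] Suc by simp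
  show ?thesis
  proof (cases l)
    case 0
    then show ?thesis using e Suc by (simp add: algebra_simps)
  next
    case (Suc l')
    have p: "(n+l) choose l = (M choose l') + (M choose l)" using Suc \<open>n+l = Suc M\<close> by simp
    have M: "n + (l-1) = M" using Suc \<open>n+l = Suc M\<close> by simp
    show ?thesis
    proof (cases n)
      case 0
      then have "M choose l = 0" using Suc \<open>n+l = Suc M\<close> by simp
      then show ?thesis using e p M Suc 0 by (simp add: algebra_simps)
    next
      case (Suc n')
      then have "n - 1 + l = M" using \<open>n+l = Suc M\<close> by simp
      then show ?thesis using e p M \<open>l = Suc l'\<close> Suc by (simp add: algebra_simps)
    qed
  qed
qed

lemma S2: assumes "L \<ge> 1"
  shows "(of_nat ((n+L) choose L) :: complex) - of_nat ((n+(L-1)) choose (L-1)) = (if n = 0 then 0 else of_nat ((n-1+L) choose L))"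
proof (cases n)
  case 0 then show ?thesis by simp
next
  case (Suc n')
  obtain L' where L: "L = Suc L'" using assms by (cases L) auto
  have "(n+L) choose L = ((n+L') choose L') + ((n+L') choose L)" using L by simp
  then show ?thesis using Suc L by simp
qed

lemma double_delta: fixes f :: "nat \<Rightarrow> nat \<Rightarrow> complex"
  shows "(\<Sum>l<a. \<Sum>t<b. f l t * (if P \<and> l = l0 \<and> t = t0 then c else 0)) = (if P \<and> l0 < a \<and> t0 < b then f l0 t0 * c else 0)"
proof -
  have "\<And>l. (\<Sum>t<b. f l t * (if P \<and> l = l0 \<and> t = t0 then c else 0)) = (if P \<and> l = l0 then (if t0 < b then f l t0 * c else 0) else 0)"
  proof -
    fix l
    show "(\<Sum>t<b. f l t * (if P \<and> l = l0 \<and> t = t0 then c else 0)) = (if P \<and> l = l0 then (if t0 < b then f l t0 * c else 0) else 0)"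
    proof (cases "P \<and> l = l0")
      case True
      then have "(\<Sum>t<b. f l t * (if P \<and> l = l0 \<and> t = t0 then c else 0)) = (\<Sum>t<b. if t = t0 then f l t * c else 0)"
        by (intro sum.cong) auto
      also have "\<dots> = (if t0 < b then f l t0 * c else 0)" by (simp add: sum.delta')
      finally show ?thesis using True by simp
    next
      case False
      then have "\<And>t. f l t * (if P \<and> l = l0 \<and> t = t0 then c else 0) = 0" by auto
      then show ?thesis using False by (simp only: sum.neutral_const if_False)
    qed
  qed
  then have "(\<Sum>l<a. \<Sum>t<b. f l t * (if P \<and> l = l0 \<and> t = t0 then c else 0)) = (\<Sum>l<a. if l = l0 then (if P \<and> t0 < b then f l t0 * c else 0) else 0)"
    by (intro sum.cong) auto
  also have "\<dots> = (if P \<and> l0 < a \<and> t0 < b then f l0 t0 * c else 0)" by (simp add: sum.delta')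
  finally show ?thesis .
qed

lemma filter_sum: fixes f g :: "nat \<Rightarrow> complex"
  assumes "\<And>t. b \<le> t \<Longrightarrow> t < s \<Longrightarrow> g t = 0"
  shows "(\<Sum>t<b. f t * (if t < s then g t else 0)) = (\<Sum>t<s. f t * g t)"
proof -
  have "(\<Sum>t<b. f t * (if t < s then g t else 0)) = (\<Sum>t<min b s. f t * (if t < s then g t else 0))"
    by (rule sum.mono_neutral_right) auto
  also have "\<dots> = (\<Sum>t<min b s. f t * g t)" by (intro sum.cong) auto
  also have "\<dots> = (\<Sum>t<s. f t * g t)"
    by (rule sum.mono_neutral_left) (auto simp: assms)
  finally show ?thesis .
qed

lemma sum_blocks: fixes f :: "nat \<Rightarrow> 'a::comm_monoid_add"
  shows "(\<Sum>p<a*b. f p) = (\<Sum>l<a. \<Sum>t<b. f (l*b+t))"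
proof -
  have "(\<Sum>p<a*b. f p) = (\<Sum>l<a. sum f {l*b..<l*b+b})" using sum.nat_group[of f b a] by (simp add: mult.commute)
  also have "\<dots> = (\<Sum>l<a. \<Sum>t<b. f (l*b+t))"
  proof (rule sum.cong[OF refl])
    fix l
    have "sum f {l*b..<l*b+b} = (\<Sum>i=0..<b. f (l*b+i))"
      using sum.shift_bounds_nat_ivl[of f 0 "l*b" b] by (simp add: add.commute)
    then show "sum f {l*b..<l*b+b} = (\<Sum>t<b. f (l*b+t))" by (simp add: atLeast0LessThan)
  qed
  finally show ?thesis .
qed

lemma Kbar_carrier_gen: assumes "j + 2 \<le> r"
  shows "Kbar q r nu j z \<in> carrier_mat (Vd q r nu j) (Vd q r nu (Suc j))"
proof -
  have e: "Kbar q r nu j z = four_block_mat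
         (kron (1\<^sub>m q) (Fmat r j z) + kron (shiftm q) (mat_deriv 1 (Fmat r j) z))
         (- kron (lvec q * (phivec (nu - q))\<^sup>T) ((1 / fact j) \<cdot>\<^sub>m mat_deriv j (Gj0 r j) z))
         (0\<^sub>m ((nu - q) * r) (q * (r - j - 1)))
         (Kbot q r nu z)" using assms unfolding Kbar_def by simp
  show ?thesis unfolding e Vd_def
    by (rule carrier_matI; simp only: index_mat_four_block(2,3) kron_dims Fmat_dims index_add_mat(2,3) index_one_mat(2,3)
       Kbot_dims shiftm_dims mat_deriv_dims; simp)
qed

lemma idx_cases:
  fixes a b c d e :: nat
  assumes "c < a*b + d*e"
  obtains l t where "l < a" "t < b" "c = l*b+t"
  | m t where "m < d" "t < e" "c = a*b+(m*e+t)"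
proof (cases "c < a*b")
  case True
  then have b: "b > 0" by (cases b) auto
  have 1: "c div b < a" using True by (simp add: less_mult_imp_div_less)
  have 2: "c mod b < b" using b by simp
  have 3: "c = c div b * b + c mod b" by simp
  show ?thesis by (rule that(1)[OF 1 2 3])
next
  case False
  define c' where "c' = c - a*b"
  have c': "c' < d*e" using assms False c'_def by simp
  then have e: "e > 0" by (cases e) auto
  have 1: "c' div e < d" using c' by (simp add: less_mult_imp_div_less)
  have 2: "c' mod e < e" using e by simp
  have 3: "c = a*b + (c' div e * e + c' mod e)" using False c'_def by simp
  show ?thesis by (rule that(2)[OF 1 2 3])
qed

lemma single_delta: fixes f :: "nat \<Rightarrow> complex"
  shows "(\<Sum>l<a. if l = l0 then f l else 0) = (if l0 < a then f l0 else 0)"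
  by (simp add: sum.delta')


lemma sumTT: fixes X K :: "nat \<Rightarrow> nat \<Rightarrow> complex"
  assumes K: "\<And>l t. l < q \<Longrightarrow> t < b \<Longrightarrow> K l t = (if True \<and> l = l' \<and> t = s then -z else 0)
          + (if True \<and> l = l' \<and> t = Suc s then 1 else 0) + (if 0 < l' \<and> l = l'-1 \<and> t = s then -1 else 0)"
    and "l' < q" "Suc s < b"
  shows "(\<Sum>l<q. \<Sum>t<b. X l t * K l t) = X l' s * (-z) + X l' (Suc s) + (if 0 < l' then - X (l'-1) s else 0)"
proof -
  have "(\<Sum>l<q. \<Sum>t<b. X l t * K l t) = (\<Sum>l<q. \<Sum>t<b. X l t * (if True \<and> l = l' \<and> t = s then -z else 0)
      + X l t * (if True \<and> l = l' \<and> t = Suc s then 1 else 0) + X l t * (if 0 < l' \<and> l = l'-1 \<and> t = s then -1 else 0))"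
    by (intro sum.cong refl) (simp add: K distrib_left)
  also have "\<dots> = (\<Sum>l<q. \<Sum>t<b. X l t * (if True \<and> l = l' \<and> t = s then -z else 0))
      + (\<Sum>l<q. \<Sum>t<b. X l t * (if True \<and> l = l' \<and> t = Suc s then 1 else 0))
      + (\<Sum>l<q. \<Sum>t<b. X l t * (if 0 < l' \<and> l = l'-1 \<and> t = s then -1 else 0))"
    by (simp only: sum.distrib)
  also have "\<dots> = X l' s * (-z) + X l' (Suc s) + (if 0 < l' then - X (l'-1) s else 0)"
    unfolding double_delta using assms by auto
  finally show ?thesis .
qed

lemma sumTB: fixes X K :: "nat \<Rightarrow> nat \<Rightarrow> complex"
  assumes K: "\<And>l t. l < q \<Longrightarrow> t < b \<Longrightarrow> K l t = (if l = q - 1 \<and> m' = 0 \<and> t < s then - g t else 0)"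
    and "0 < q" and g: "\<And>t. b \<le> t \<Longrightarrow> t < s \<Longrightarrow> g t = 0"
  shows "(\<Sum>l<q. \<Sum>t<b. X l t * K l t) = (if m' = 0 then - (\<Sum>t<s. X (q-1) t * g t) else 0)"
proof -
  have "(\<Sum>l<q. \<Sum>t<b. X l t * K l t) = (\<Sum>l<q. if l = q - 1 then (\<Sum>t<b. X l t * (if m' = 0 \<and> t < s then - g t else 0)) else 0)"
    by (intro sum.cong refl) (auto simp: K)
  also have "\<dots> = (\<Sum>t<b. X (q-1) t * (if m' = 0 \<and> t < s then - g t else 0))"
    using assms by (simp add: sum.delta')
  also have "\<dots> = (if m' = 0 then (\<Sum>t<b. X (q-1) t * (if t < s then - g t else 0)) else 0)"
    by (cases "m' = 0") simp_all
  also have "(\<Sum>t<b. X (q-1) t * (if t < s then - g t else 0)) = (\<Sum>t<s. X (q-1) t * (- g t))"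
    by (rule filter_sum) (simp add: g)
  finally show ?thesis by (simp add: sum_negf)
qed

lemma sumBB: fixes Y K :: "nat \<Rightarrow> nat \<Rightarrow> complex"
  assumes K: "\<And>m t. m < d \<Longrightarrow> t < r \<Longrightarrow> K m t = (if m = m' \<and> t = s then 1 else 0) - (if m+1 = m' \<and> t < s then z^(s-t-1) else 0)"
    and "m' < d" "s < r"
  shows "(\<Sum>m<d. \<Sum>t<r. Y m t * K m t) = Y m' s - (if 0 < m' then (\<Sum>t<s. Y (m'-1) t * z^(s-t-1)) else 0)"
proof -
  have "(\<Sum>m<d. \<Sum>t<r. Y m t * K m t) = (\<Sum>m<d. \<Sum>t<r. Y m t * (if True \<and> m = m' \<and> t = s then 1 else 0)
     - (if m = m' - 1 \<and> 0 < m' then Y m t * (if t < s then z^(s-t-1) else 0) else 0))"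
    by (intro sum.cong refl) (auto simp: K algebra_simps)
  also have "\<dots> = (\<Sum>m<d. \<Sum>t<r. Y m t * (if True \<and> m = m' \<and> t = s then 1 else 0))
     - (\<Sum>m<d. if m = m' - 1 then (if 0 < m' then (\<Sum>t<r. Y m t * (if t < s then z^(s-t-1) else 0)) else 0) else 0)"
  proof -
    have "(\<Sum>m<d. \<Sum>t<r. (if m = m' - 1 \<and> 0 < m' then Y m t * (if t < s then z^(s-t-1) else 0) else 0))
      = (\<Sum>m<d. if m = m' - 1 then (if 0 < m' then (\<Sum>t<r. Y m t * (if t < s then z^(s-t-1) else 0)) else 0) else 0)"
      by (intro sum.cong refl) auto
    then show ?thesis by (simp only: sum_subtractf)
  qed
  also have "\<dots> = Y m' s - (if 0 < m' then (\<Sum>t<r. Y (m'-1) t * (if t < s then z^(s-t-1) else 0)) else 0)"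
    unfolding double_delta using assms by (simp add: sum.delta')
  also have "(\<Sum>t<r. Y (m'-1) t * (if t < s then z^(s-t-1) else 0)) = (\<Sum>t<s. Y (m'-1) t * z^(s-t-1))"
    by (rule filter_sum) (use assms in auto)
  finally show ?thesis .
qed


lemma PhiK:
  assumes jr: "j + 2 \<le> r" and jk: "j \<le> k" and q0: "0 < q" and qnu: "q \<le> nu"
  shows "Phi q r nu j k z * Kbar q r nu j z =
     (if k = j then 0\<^sub>m q (Vd q r nu (Suc j)) else Phi q r nu (Suc j) k z)"
    (is "?P * ?K = ?R")
proof -
  have PC: "?P \<in> carrier_mat q (Vd q r nu j)" by (rule Phi_carrier)
  have KC: "?K \<in> carrier_mat (Vd q r nu j) (Vd q r nu (Suc j))" by (rule Kbar_carrier_gen[OF jr])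
  have RC: "?R \<in> carrier_mat q (Vd q r nu (Suc j))" using Phi_carrier by simp
  show ?thesis
  proof (rule eq_matI)
    show "dim_row (?P * ?K) = dim_row ?R" "dim_col (?P * ?K) = dim_col ?R" using PC KC RC by auto
    fix i c assume "i < dim_row ?R" "c < dim_col ?R"
    then have i: "i < q" and c: "c < q*(r - Suc j) + (nu-q)*r" using RC by (auto simp: Vd_def)
    define n where "n = k - j"
    have entry: "(?P * ?K) $$ (i,c) = (\<Sum>l<q. \<Sum>t<r-j. ?P $$ (i, l*(r-j)+t) * ?K $$ (l*(r-j)+t, c))
       + (\<Sum>m<nu-q. \<Sum>t<r. ?P $$ (i, q*(r-j)+(m*r+t)) * ?K $$ (q*(r-j)+(m*r+t), c))"
    proof -
      have "c < Vd q r nu (Suc j)" using c by (simp add: Vd_def)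
      then have "(?P * ?K) $$ (i,c) = (\<Sum>p<q*(r-j) + (nu-q)*r. ?P $$ (i,p) * ?K $$ (p,c))"
        using mult_index_sum[OF PC KC i] by (simp add: Vd_def)
      then show ?thesis by (simp only: sum_add_split sum_blocks)
    qed
    from c show "(?P * ?K) $$ (i,c) = ?R $$ (i,c)"
    proof (cases rule: idx_cases)
      case (1 l' s)
      have top: "(\<Sum>l<q. \<Sum>t<r-j. ?P $$ (i, l*(r-j)+t) * ?K $$ (l*(r-j)+t, c))
          = ?P $$ (i, l'*(r-j)+s) * (-z) + ?P $$ (i, l'*(r-j)+Suc s) + (if 0 < l' then - ?P $$ (i, (l'-1)*(r-j)+s) else 0)"
        apply (rule sumTT[where X="\<lambda>l t. ?P $$ (i, l*(r-j)+t)"])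
        subgoal for l t using Kbar_TT[where j=j and r=r and l=l and q=q and t=t and l'=l' and s=s and nu=nu and z=z] 1 jr by auto
        using 1 by auto
      have bot: "(\<Sum>m<nu-q. \<Sum>t<r. ?P $$ (i, q*(r-j)+(m*r+t)) * ?K $$ (q*(r-j)+(m*r+t), c)) = 0"
        using 1 jr by (intro sum.neutral ballI) (simp add: Kbar_BT)
      have s1: "Suc s < r - j" using 1 by simp
      have e1: "?P $$ (i, l'*(r-j)+s) = of_nat ((n+l') choose l') * zt z (n+l') (i+s)"
        using Phi_top[OF i 1(1), of s r j nu k z] s1 n_def by simp
      have e2: "?P $$ (i, l'*(r-j)+Suc s) = of_nat ((n+l') choose l') * zt z (n+l') (Suc (i+s))"
        using Phi_top[OF i 1(1) s1, of nu k z] n_def by simp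
      have e3: "(if 0 < l' then - ?P $$ (i, (l'-1)*(r-j)+s) else 0) =
          (if 0 < l' then - (of_nat ((n+(l'-1)) choose (l'-1)) * zt z (n+(l'-1)) (i+s)) else 0)"
        using Phi_top[OF i _ , of "l'-1" s r j nu k z] s1 n_def 1(1) by auto
      have e4: "?R $$ (i,c) = (if n = 0 then 0 else of_nat ((n-1+l') choose l') * zt z (n-1+l') (i+s))"
        using Phi_top[OF i 1(1) 1(2), of nu k z] 1(3) n_def jk i 1 c by (auto simp: Vd_def)
      show ?thesis
        unfolding entry top bot e1 e2 e3 e4 using S1[of n l' z "i+s"] by simp
    next
    next
      case (2 m' s)
      define Xf where "Xf l t = of_nat ((n+l) choose l) * zt z (n+l) (i+t)" for l t
      define Yf where "Yf m t = of_nat ((n+(q+m)) choose (q+m)) * zt z (k+(q+m)) (i+t)" for m t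
      have top0: "(\<Sum>l<q. \<Sum>t<r-j. ?P $$ (i, l*(r-j)+t) * ?K $$ (l*(r-j)+t, c))
          = (\<Sum>l<q. \<Sum>t<r-j. Xf l t * ?K $$ (l*(r-j)+t, c))"
        by (intro sum.cong refl) (simp add: Phi_top[OF i] Xf_def n_def)
      have top: "(\<Sum>l<q. \<Sum>t<r-j. Xf l t * ?K $$ (l*(r-j)+t, c))
          = (if m' = 0 then - (\<Sum>t<s. Xf (q-1) t * zt z j (s-t-1)) else 0)"
      proof (rule sumTB[OF _ q0])
        fix l t assume "l < q" "t < r - j"
        then show "?K $$ (l*(r-j)+t, c) = (if l = q - 1 \<and> m' = 0 \<and> t < s then - zt z j (s-t-1) else 0)"
          using Kbar_TB[OF jr _ _ 2(1) 2(2), of l t z] 2(3) by simp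
      next
        fix t assume "r - j \<le> t" "t < s"
        then show "zt z j (s-t-1) = 0" using 2(2) by (intro zt_less) linarith
      qed
      have bot0: "(\<Sum>m<nu-q. \<Sum>t<r. ?P $$ (i, q*(r-j)+(m*r+t)) * ?K $$ (q*(r-j)+(m*r+t), c))
          = (\<Sum>m<nu-q. \<Sum>t<r. Yf m t * ?K $$ (q*(r-j)+(m*r+t), c))"
        by (intro sum.cong refl) (simp add: Phi_bot[OF i] Yf_def n_def)
      have bot: "(\<Sum>m<nu-q. \<Sum>t<r. Yf m t * ?K $$ (q*(r-j)+(m*r+t), c))
          = Yf m' s - (if 0 < m' then (\<Sum>t<s. Yf (m'-1) t * z^(s-t-1)) else 0)"
      proof (rule sumBB[OF _ 2(1) 2(2)])
        fix m t assume "m < nu - q" "t < r"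
        then show "?K $$ (q*(r-j)+(m*r+t), c) = (if m = m' \<and> t = s then 1 else 0) - (if m+1 = m' \<and> t < s then z^(s-t-1) else 0)"
          using Kbar_BB[OF jr _ _ 2(1) 2(2), of m t z] 2(3) by simp
      qed
      have Rv: "?R $$ (i,c) = (if n = 0 then 0 else of_nat ((n-1+(q+m')) choose (q+m')) * zt z (k+(q+m')) (i+s))"
        using Phi_bot[OF i 2(1) 2(2), of "Suc j" k z] 2(3) n_def jk c i by (auto simp: Vd_def)
      show ?thesis
      proof (cases "m' = 0")
        case True
        have cv: "(\<Sum>t<s. Xf (q-1) t * zt z j (s-t-1)) = of_nat ((n+(q-1)) choose (q-1)) * zt z (k+q) (i+s)"
        proof -
          have "(\<Sum>t<s. Xf (q-1) t * zt z j (s-t-1)) = of_nat ((n+(q-1)) choose (q-1)) * (\<Sum>t<s. zt z (n+(q-1)) (i+t) * zt z j (s-t-1))"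
            by (simp add: Xf_def sum_distrib_left mult.assoc)
          also have "(\<Sum>t<s. zt z (n+(q-1)) (i+t) * zt z j (s-t-1)) = zt z (n+(q-1)+j+1) (i+s)"
            by (rule zt_conv) (use i in simp)
          also have "n+(q-1)+j+1 = k+q" using n_def jk q0 by simp
          finally show ?thesis .
        qed
        have s2: "(of_nat ((n+q) choose q) :: complex) - of_nat ((n+(q-1)) choose (q-1)) = (if n = 0 then 0 else of_nat ((n-1+q) choose q))"
          using S2[of q n] q0 by simp
        show ?thesis unfolding entry top0 top bot0 bot Rv using True cv s2
          by (simp add: Yf_def algebra_simps)
      next
        case False
        have cv: "(\<Sum>t<s. Yf (m'-1) t * z^(s-t-1)) = of_nat ((n+(q+(m'-1))) choose (q+(m'-1))) * zt z (k+(q+m')) (i+s)"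
        proof -
          have "(\<Sum>t<s. Yf (m'-1) t * z^(s-t-1)) = of_nat ((n+(q+(m'-1))) choose (q+(m'-1))) * (\<Sum>t<s. zt z (k+(q+(m'-1))) (i+t) * zt z 0 (s-t-1))"
            by (simp add: Yf_def sum_distrib_left mult.assoc zt_0)
          also have "(\<Sum>t<s. zt z (k+(q+(m'-1))) (i+t) * zt z 0 (s-t-1)) = zt z (k+(q+(m'-1))+0+1) (i+s)"
            by (rule zt_conv) (use i in simp)
          also have "k+(q+(m'-1))+0+1 = k+(q+m')" using False by simp
          finally show ?thesis .
        qed
        have s2: "(of_nat ((n+(q+m')) choose (q+m')) :: complex) - of_nat ((n+(q+m'-1)) choose (q+m'-1)) = (if n = 0 then 0 else of_nat ((n-1+(q+m')) choose (q+m')))"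
          using S2[of "q+m'" n] q0 by simp
        have e: "q + (m' - 1) = q + m' - 1" using False by simp
        show ?thesis unfolding entry top0 top bot0 bot Rv using False cv s2
          by (simp add: Yf_def algebra_simps e)
      qed
    qed
  qed
qed

lemma Kbar_last_eq: assumes "r \<ge> 1"
  shows "Kbar q r nu (r-1) z = four_block_mat (0\<^sub>m q 0) (0\<^sub>m q ((nu - q) * r)) (0\<^sub>m ((nu - q) * r) 0) (Kbot q r nu z)"
  using assms unfolding Kbar_def by simp

lemma Kbar_big_eq: assumes "r \<le> j" "r \<ge> 1" shows "Kbar q r nu j z = Kbot q r nu z"
proof -
  have "\<not> j + 2 \<le> r" "j \<noteq> r - 1" using assms by auto
  then show ?thesis unfolding Kbar_def by simp
qed

lemma Kbar_carrier: assumes "r \<ge> 1"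
  shows "Kbar q r nu j z \<in> carrier_mat (Vd q r nu j) (Vd q r nu (Suc j))"
proof -
  consider "j + 2 \<le> r" | "j = r - 1" | "r \<le> j" by linarith
  then show ?thesis
  proof cases
    case 1 then show ?thesis by (rule Kbar_carrier_gen)
  next
    case 2
    then show ?thesis using assms unfolding Kbar_last_eq[OF assms] 2
      by (intro carrier_matI) (simp_all add: Vd_def)
  next
    case 3
    then show ?thesis unfolding Kbar_big_eq[OF 3 assms] by (intro carrier_matI) (simp_all add: Vd_def)
  qed
qed

lemma Kprod_carrier: assumes "r \<ge> 1"
  shows "Kprod q r nu i z \<in> carrier_mat (Vd q r nu 0) (Vd q r nu (Suc i))"
proof (induction i)
  case 0 then show ?case using Kbar_carrier[OF assms] by simp
next
  case (Suc i) then show ?case using Kbar_carrier[OF assms] by simp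
qed

lemma Nblk_carrier: assumes "q \<le> nu"
  shows "Nblk q r nu k z \<in> carrier_mat q (Vd q r nu 0)"
  using assms by (simp add: Nblk_def Vd_def algebra_simps)

lemma PhiK_last:
  assumes r2: "2 \<le> r" and kr: "r - 1 \<le> k" and q0: "0 < q" and qnu: "q \<le> nu"
  shows "Phi q r nu (r-1) k z * Kbar q r nu (r-1) z = 0\<^sub>m q ((nu-q)*r)"
proof -
  let ?P = "Phi q r nu (r-1) k z" let ?K = "Kbar q r nu (r-1) z"
  have r1: "r \<ge> 1" using r2 by simp
  have PC: "?P \<in> carrier_mat q (q + (nu-q)*r)" using Phi_carrier[of q r nu "r-1" k z] r2 by (simp add: Vd_def)
  have KC: "?K \<in> carrier_mat (q + (nu-q)*r) ((nu-q)*r)" using Kbar_carrier[OF r1, of q nu "r-1" z] r2 by (simp add: Vd_def)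
  show ?thesis
  proof (rule eq_matI)
    show "dim_row (?P * ?K) = dim_row (0\<^sub>m q ((nu-q)*r))" "dim_col (?P * ?K) = dim_col (0\<^sub>m q ((nu-q)*r))"
      using PC KC by auto
    fix i c assume "i < dim_row (0\<^sub>m q ((nu - q) * r))" "c < dim_col (0\<^sub>m q ((nu - q) * r))"
    then have i: "i < q" and c: "c < (nu-q)*r" by auto
    have "(?P * ?K) $$ (i,c) = (\<Sum>p<q + (nu-q)*r. ?P $$ (i,p) * ?K $$ (p,c))"
      by (rule mult_index_sum[OF PC KC i c])
    also have "\<dots> = (\<Sum>p<q. ?P $$ (i,p) * ?K $$ (p,c)) + (\<Sum>m<nu-q. \<Sum>t<r. ?P $$ (i,q+(m*r+t)) * ?K $$ (q+(m*r+t),c))"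
      by (simp only: sum_add_split sum_blocks)
    also have "(\<Sum>p<q. ?P $$ (i,p) * ?K $$ (p,c)) = 0"
    proof (intro sum.neutral ballI)
      fix p assume "p \<in> {..<q}"
      then have "?K $$ (p,c) = 0" unfolding Kbar_last_eq[OF r1] using c by simp
      then show "?P $$ (i,p) * ?K $$ (p,c) = 0" by simp
    qed
    also have "(\<Sum>m<nu-q. \<Sum>t<r. ?P $$ (i,q+(m*r+t)) * ?K $$ (q+(m*r+t),c)) = 0"
    proof (intro sum.neutral ballI)
      fix m t assume m: "m \<in> {..<nu-q}" and t: "t \<in> {..<r}"
      have e: "?P $$ (i, q*(r-(r-1))+(m*r+t)) = of_nat ((k-(r-1)+(q+m)) choose (q+m)) * zt z (k+(q+m)) (i+t)"
        using Phi_bot[OF i, of m nu t r "r-1" k z] m t by simp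
      have t': "t < r" using t by simp
      have z0: "zt z (k+(q+m)) (i+t) = 0" using i t' kr by (intro zt_less) linarith
      have qq: "q*(r-(r-1)) = q" using r1 by simp
      have "?P $$ (i, q+(m*r+t)) = 0" using e z0 unfolding qq by simp
      then show "?P $$ (i,q+(m*r+t)) * ?K $$ (q+(m*r+t),c) = 0" by simp
    qed
    finally show "(?P * ?K) $$ (i,c) = 0\<^sub>m q ((nu-q)*r) $$ (i,c)" using i c by simp
  qed
qed


locale setting =
  fixes q r nu :: nat and z :: complex
  assumes q0: "0 < q" and r2: "2 \<le> r" and qnu: "q < nu"
begin

lemma r1: "1 \<le> r" using r2 by simp
lemma qle: "q \<le> nu" using qnu by simp

lemma P1: "Suc j \<le> k \<Longrightarrow> Suc j \<le> r - 1 \<Longrightarrow> Nblk q r nu k z * Kprod q r nu j z = Phi q r nu (Suc j) k z"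
proof (induction j arbitrary: k)
  case 0
  have "Nblk q r nu k z * Kprod q r nu 0 z = Phi q r nu 0 k z * Kbar q r nu 0 z"
    using Phi0[of r q nu k z] r1 qle by simp
  also have "\<dots> = Phi q r nu 1 k z" using PhiK[of 0 r k q nu z] 0 q0 qle by simp
  finally show ?case by simp
next
  case (Suc j)
  have NC: "Nblk q r nu k z \<in> carrier_mat q (Vd q r nu 0)" by (rule Nblk_carrier[OF qle])
  have "Nblk q r nu k z * Kprod q r nu (Suc j) z = (Nblk q r nu k z * Kprod q r nu j z) * Kbar q r nu (Suc j) z"
    using assoc_mult_mat[OF NC Kprod_carrier[OF r1] Kbar_carrier[OF r1]] by simp
  also have "\<dots> = Phi q r nu (Suc j) k z * Kbar q r nu (Suc j) z" using Suc by simp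
  also have "\<dots> = Phi q r nu (Suc (Suc j)) k z" using PhiK[of "Suc j" r k q nu z] Suc.prems q0 qle by simp
  finally show ?case .
qed

lemma P2: "k + 2 \<le> r \<Longrightarrow> Nblk q r nu k z * Kprod q r nu k z = 0\<^sub>m q (Vd q r nu (Suc k))"
proof (cases k)
  case 0
  assume "k + 2 \<le> r"
  have "Nblk q r nu k z * Kprod q r nu k z = Phi q r nu 0 0 z * Kbar q r nu 0 z"
    using Phi0[of r q nu 0 z] r1 qle 0 by simp
  also have "\<dots> = 0\<^sub>m q (Vd q r nu (Suc k))" using PhiK[of 0 r 0 q nu z] 0 q0 qle r2 by simp
  finally show ?thesis .
next
  case (Suc k')
  assume kr: "k + 2 \<le> r"
  have NC: "Nblk q r nu k z \<in> carrier_mat q (Vd q r nu 0)" by (rule Nblk_carrier[OF qle])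
  have "Nblk q r nu k z * Kprod q r nu k z = (Nblk q r nu k z * Kprod q r nu k' z) * Kbar q r nu k z"
    using assoc_mult_mat[OF NC Kprod_carrier[OF r1] Kbar_carrier[OF r1]] Suc by simp
  also have "\<dots> = Phi q r nu k k z * Kbar q r nu k z" using P1[of k' k] Suc kr by simp
  also have "\<dots> = 0\<^sub>m q (Vd q r nu (Suc k))" using PhiK[of k r k q nu z] kr q0 qle by simp
  finally show ?thesis .
qed

lemma P3: "r - 1 \<le> k \<Longrightarrow> Nblk q r nu k z * Kprod q r nu (r-1) z = 0\<^sub>m q (Vd q r nu r)"
proof -
  assume kr: "r - 1 \<le> k"
  obtain r' where r': "r - 1 = Suc r'" using r2 by (cases "r - 1") auto
  have NC: "Nblk q r nu k z \<in> carrier_mat q (Vd q r nu 0)" by (rule Nblk_carrier[OF qle])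
  have "Nblk q r nu k z * Kprod q r nu (r-1) z = (Nblk q r nu k z * Kprod q r nu r' z) * Kbar q r nu (r-1) z"
    using assoc_mult_mat[OF NC Kprod_carrier[OF r1] Kbar_carrier[OF r1]] r' by simp
  also have "\<dots> = Phi q r nu (r-1) k z * Kbar q r nu (r-1) z" using P1[of r' k] r' kr by simp
  also have "\<dots> = 0\<^sub>m q ((nu-q)*r)" by (rule PhiK_last[OF r2 kr q0 qle])
  finally show ?thesis by (simp add: Vd_def)
qed

lemma Pext: assumes "Nblk q r nu k z * Kprod q r nu i0 z = 0\<^sub>m q (Vd q r nu (Suc i0))" "i0 \<le> i"
  shows "Nblk q r nu k z * Kprod q r nu i z = 0\<^sub>m q (Vd q r nu (Suc i))"
  using assms(2)
proof (induction i rule: dec_induct)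
  case base then show ?case using assms(1) .
next
  case (step i)
  have NC: "Nblk q r nu k z \<in> carrier_mat q (Vd q r nu 0)" by (rule Nblk_carrier[OF qle])
  have "Nblk q r nu k z * Kprod q r nu (Suc i) z = (Nblk q r nu k z * Kprod q r nu i z) * Kbar q r nu (Suc i) z"
    using assoc_mult_mat[OF NC Kprod_carrier[OF r1] Kbar_carrier[OF r1]] by simp
  also have "\<dots> = 0\<^sub>m q (Vd q r nu (Suc i)) * Kbar q r nu (Suc i) z" using step by simp
  also have "\<dots> = 0\<^sub>m q (Vd q r nu (Suc (Suc i)))" using Kbar_carrier[OF r1, of q nu "Suc i" z] by (rule left_mult_zero_mat)
  finally show ?case .
qed

lemma part_i: "k \<le> i \<Longrightarrow> Nblk q r nu k z * Kprod q r nu i z = 0\<^sub>m q (dim_col (Kprod q r nu i z))"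
proof -
  assume ki: "k \<le> i"
  have dc: "dim_col (Kprod q r nu i z) = Vd q r nu (Suc i)" using Kprod_carrier[OF r1, of q nu i z] by simp
  show ?thesis unfolding dc
  proof (cases "k + 2 \<le> r")
    case True then show "Nblk q r nu k z * Kprod q r nu i z = 0\<^sub>m q (Vd q r nu (Suc i))"
      using Pext[OF P2 ki] by simp
  next
    case False
    then have "r - 1 \<le> k" by simp
    moreover have "Vd q r nu r = Vd q r nu (Suc (r-1))" using r1 by simp
    ultimately show "Nblk q r nu k z * Kprod q r nu i z = 0\<^sub>m q (Vd q r nu (Suc i))"
      using Pext[of k "r-1" i] P3 ki by simp
  qed
qed

end

lemma tri_inj:
  fixes A :: "complex mat"
  assumes A: "A \<in> carrier_mat nr nc" and v: "v \<in> carrier_vec nc" and Av: "A *\<^sub>v v = 0\<^sub>v nr"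
    and rho: "\<And>c. c < nc \<Longrightarrow> rho c < nr"
    and diag: "\<And>c. c < nc \<Longrightarrow> A $$ (rho c, c) = 1"
    and low: "\<And>c c'. c < nc \<Longrightarrow> c' < c \<Longrightarrow> A $$ (rho c, c') = 0"
  shows "v = 0\<^sub>v nc"
proof -
  have main: "\<forall>c. c < nc \<longrightarrow> nc - c \<le> d \<longrightarrow> v $ c = 0" for d
  proof (induction d)
    case 0 then show ?case by auto
  next
    case (Suc d)
    show ?case
    proof (intro allI impI)
      fix c assume c: "c < nc" and d: "nc - c \<le> Suc d"
      have hi: "\<And>c'. c < c' \<Longrightarrow> c' < nc \<Longrightarrow> v $ c' = 0" using Suc.IH d by auto
      have "0 = (A *\<^sub>v v) $ rho c" using Av rho[OF c] by simp
      also have "\<dots> = (\<Sum>c'<nc. A $$ (rho c, c') * v $ c')"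
        using A v rho[OF c] by (auto simp: scalar_prod_def atLeast0LessThan intro!: sum.cong)
      also have "\<dots> = (\<Sum>c'<nc. if c' = c then v $ c else 0)"
      proof (intro sum.cong refl)
        fix c' assume "c' \<in> {..<nc}"
        then show "A $$ (rho c, c') * v $ c' = (if c' = c then v $ c else 0)"
          using diag[OF c] low[OF c, of c'] hi[of c'] by (cases "c' < c"; cases "c' = c") auto
      qed
      also have "\<dots> = v $ c" using c by (simp add: sum.delta')
      finally show "v $ c = 0" by simp
    qed
  qed
  show ?thesis
  proof (rule eq_vecI)
    show "dim_vec v = dim_vec (0\<^sub>v nc)" using v by simp
    fix c assume "c < dim_vec (0\<^sub>v nc)"
    then show "v $ c = 0\<^sub>v nc $ c" using main[of nc] by simp
  qed
qed

lemma lex_less: fixes B :: nat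
  assumes "s < B" "s' < B" "l'*B + s' < l*B + s"
  shows "l' < l \<or> (l' = l \<and> s' < s)"
proof (rule ccontr)
  assume "\<not> ?thesis"
  then consider "l < l'" | "l' = l" "s \<le> s'" by linarith
  then show False
  proof cases
    case 1
    then have "Suc l * B \<le> l' * B" by (intro mult_right_mono) auto
    then show False using assms by simp
  next
    case 2 then show False using assms by simp
  qed
qed


lemma blk_dec: fixes c d r :: nat assumes "c < d*r"
  shows "c = (c div r)*r + c mod r" "c div r < d" "c mod r < r"
proof -
  show "c = (c div r)*r + c mod r" by simp
  show "c div r < d" using assms by (simp add: less_mult_imp_div_less)
  have "r > 0" using assms by (cases r) auto
  then show "c mod r < r" by simp
qed

lemma Kbot_diag: assumes "c < (nu-q)*r" shows "Kbot q r nu z $$ (c,c) = 1"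
proof -
  note d = blk_dec[OF assms]
  have "Kbot q r nu z $$ (c,c) = Kbot q r nu z $$ ((c div r)*r + c mod r, (c div r)*r + c mod r)" using d(1) by simp
  also have "\<dots> = 1" by (subst Kbot_index[OF d(2,3) d(2,3)]) simp
  finally show ?thesis .
qed

lemma Kbot_low: assumes "c < (nu-q)*r" "c' < c" shows "Kbot q r nu z $$ (c,c') = 0"
proof -
  have c': "c' < (nu-q)*r" using assms by simp
  note d = blk_dec[OF assms(1)] and d' = blk_dec[OF c']
  have lx: "c' div r < c div r \<or> (c' div r = c div r \<and> c' mod r < c mod r)"
    by (rule lex_less[OF d(3) d'(3)]) (use d d' assms(2) in linarith)
  have "Kbot q r nu z $$ (c,c') = Kbot q r nu z $$ ((c div r)*r + c mod r, (c' div r)*r + c' mod r)" using d(1) d'(1) by simp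
  also have "\<dots> = 0" using lx by (subst Kbot_index[OF d(2,3) d'(2,3)]) auto
  finally show ?thesis .
qed

lemma Kbot_inj: assumes "v \<in> carrier_vec ((nu-q)*r)" "Kbot q r nu z *\<^sub>v v = 0\<^sub>v ((nu-q)*r)"
  shows "v = 0\<^sub>v ((nu-q)*r)"
proof (rule tri_inj[OF _ assms, where rho="\<lambda>c. c"])
  show "Kbot q r nu z \<in> carrier_mat ((nu-q)*r) ((nu-q)*r)" by (rule carrier_matI) simp_all
qed (simp_all add: Kbot_diag Kbot_low)


lemma Kbar_inj_gen:
  assumes jr: "j + 2 \<le> r" and v: "v \<in> carrier_vec (Vd q r nu (Suc j))"
    and Kv: "Kbar q r nu j z *\<^sub>v v = 0\<^sub>v (Vd q r nu j)"
  shows "v = 0\<^sub>v (Vd q r nu (Suc j))"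
proof -
  obtain B where B: "r - Suc j = B" "r - j = Suc B" "B \<ge> 1" using jr by (cases "r - Suc j") auto
  define rho where "rho c = (if c < q*B then (c div B)*Suc B + c mod B + 1 else c + q)" for c
  have VS: "Vd q r nu (Suc j) = q*B + (nu-q)*r" "Vd q r nu j = q*Suc B + (nu-q)*r"
    using B by (simp_all add: Vd_def)
  have rtop: "rho (l*B+s) = l*Suc B + Suc s" if "l < q" "s < B" for l s
    unfolding rho_def using that blk_less[of l q s B] by simp
  have rbot: "rho (q*B+(m*r+t)) = q*Suc B + (m*r+t)" for m t
    unfolding rho_def by simp
  have KTT: "Kbar q r nu j z $$ (l*Suc B+t, l'*B+s) =
     (if l = l' then (if t = s then -z else if t = s+1 then 1 else 0) else 0) + (if l+1 = l' \<and> t = s then -1 else 0)"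
    if "l < q" "t < Suc B" "l' < q" "s < B" for l t l' s
    using Kbar_TT[OF jr, of l q t l' s nu z] that B by simp
  have KTB: "Kbar q r nu j z $$ (l*Suc B+t, q*B+(m'*r+s)) = (if l = q - 1 \<and> m' = 0 \<and> t < s then - zt z j (s-t-1) else 0)"
    if "l < q" "t < Suc B" "m' < nu - q" "s < r" for l t m' s
    using Kbar_TB[OF jr, of l q t m' nu s z] that B by simp
  have KBT: "Kbar q r nu j z $$ (q*Suc B+(m*r+t), l'*B+s) = 0"
    if "m < nu - q" "t < r" "l' < q" "s < B" for m t l' s
    using Kbar_BT[OF jr, of m nu q t l' s z] that B by simp
  have KBB: "Kbar q r nu j z $$ (q*Suc B+(m*r+t), q*B+(m'*r+s)) = (if m = m' \<and> t = s then 1 else 0) - (if m+1 = m' \<and> t < s then z^(s-t-1) else 0)"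
    if "m < nu - q" "t < r" "m' < nu - q" "s < r" for m t m' s
    using Kbar_BB[OF jr, of m nu q t m' s z] that B by simp
  show ?thesis
  proof (rule tri_inj[OF Kbar_carrier_gen[OF jr] v Kv, where rho=rho])
    fix c assume c: "c < Vd q r nu (Suc j)"
    then have c': "c < q*B + (nu-q)*r" using VS by simp
    then show "rho c < Vd q r nu j"
    proof (cases rule: idx_cases)
      case (1 l s)
      have "l*Suc B + Suc s < q*Suc B" using blk_less[of l q "Suc s" "Suc B"] 1 by simp
      then show ?thesis using VS rtop[OF 1(1,2)] 1(3) by simp
    next
      case (2 m t)
      have "m*r+t < (nu-q)*r" using blk_less[of m "nu-q" t r] 2 by simp
      then show ?thesis using VS rbot 2(3) by simp
    qed
    from c' show "Kbar q r nu j z $$ (rho c, c) = 1"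
    proof (cases rule: idx_cases)
      case (1 l s)
      then show ?thesis using rtop[OF 1(1,2)] KTT[of l "Suc s" l s] by simp
    next
      case (2 m t)
      then show ?thesis using rbot KBB[of m t m t] by simp
    qed
    fix c'' assume cc: "c'' < c"
    then have c'': "c'' < q*B + (nu-q)*r" using c' by simp
    from c' show "Kbar q r nu j z $$ (rho c, c'') = 0"
    proof (cases rule: idx_cases)
      case (1 l s)
      from c'' show ?thesis
      proof (cases rule: idx_cases)
        case (1 l' s')
        have lx: "l' < l \<or> (l' = l \<and> s' < s)" using lex_less[of s B s' l' l] 1 \<open>l < q\<close> \<open>s < B\<close> \<open>c = l*B+s\<close> cc by simp
        then show ?thesis using rtop[of l s] KTT[of l "Suc s" l' s'] 1 \<open>l < q\<close> \<open>s < B\<close> \<open>c = l*B+s\<close> by auto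
      next
        case (2 m' t')
        have "c < q*B" using blk_less[of l q s B] \<open>l < q\<close> \<open>s < B\<close> \<open>c = l*B+s\<close> by simp
        then show ?thesis using 2 cc by simp
      qed
    next
      case (2 m t)
      from c'' show ?thesis
      proof (cases rule: idx_cases)
        case (1 l' s')
        then show ?thesis using rbot KBT[of m t l' s'] \<open>m < nu - q\<close> \<open>t < r\<close> \<open>c = q*B+(m*r+t)\<close> by simp
      next
        case (2 m' t')
        have lx: "m' < m \<or> (m' = m \<and> t' < t)" using lex_less[of t r t' m' m] 2 \<open>t < r\<close> \<open>c = q*B+(m*r+t)\<close> cc by simp
        then show ?thesis using rbot KBB[of m t m' t'] 2 \<open>m < nu - q\<close> \<open>t < r\<close> \<open>c = q*B+(m*r+t)\<close> by auto
      qed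
    qed
  qed
qed


lemma Kbar_last_index: assumes "r \<ge> 1" "c < (nu-q)*r" "c' < (nu-q)*r"
  shows "Kbar q r nu (r-1) z $$ (q+c, c') = Kbot q r nu z $$ (c,c')"
  unfolding Kbar_last_eq[OF assms(1)] using assms by simp

lemma Kbar_inj: assumes r1: "r \<ge> 1" and v: "v \<in> carrier_vec (Vd q r nu (Suc j))"
    and Kv: "Kbar q r nu j z *\<^sub>v v = 0\<^sub>v (Vd q r nu j)"
  shows "v = 0\<^sub>v (Vd q r nu (Suc j))"
proof -
  consider "j + 2 \<le> r" | "j = r - 1" | "r \<le> j" by linarith
  then show ?thesis
  proof cases
    case 1 then show ?thesis using Kbar_inj_gen v Kv by blast
  next
    case 2
    have VS: "Vd q r nu (Suc j) = (nu-q)*r" "Vd q r nu j = q + (nu-q)*r" using 2 r1 by (simp_all add: Vd_def)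
    show ?thesis
    proof (rule tri_inj[OF Kbar_carrier[OF r1] v Kv, where rho="\<lambda>c. q + c"])
      fix c assume c: "c < Vd q r nu (Suc j)"
      then show "q + c < Vd q r nu j" using VS by simp
      show "Kbar q r nu j z $$ (q + c, c) = 1" using Kbar_last_index[OF r1, where c=c and c'=c and q=q and nu=nu and z=z] c VS 2 Kbot_diag[of c nu q r z] by simp
      fix c' assume "c' < c"
      then show "Kbar q r nu j z $$ (q + c, c') = 0" using Kbar_last_index[OF r1, where c=c and c'=c' and q=q and nu=nu and z=z] c VS 2 Kbot_low[of c nu q r c' z] by simp
    qed
  next
    case 3
    have VS: "Vd q r nu (Suc j) = (nu-q)*r" "Vd q r nu j = (nu-q)*r" using 3 by (simp_all add: Vd_def)
    show ?thesis using Kbot_inj[where v=v and q=q and r=r and nu=nu and z=z] v Kv unfolding Kbar_big_eq[OF 3 r1] VS by simp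
  qed
qed

lemma Kprod_inj: assumes r1: "r \<ge> 1" and v: "v \<in> carrier_vec (Vd q r nu (Suc i))"
    and Kv: "Kprod q r nu i z *\<^sub>v v = 0\<^sub>v (Vd q r nu 0)"
  shows "v = 0\<^sub>v (Vd q r nu (Suc i))"
  using v Kv
proof (induction i arbitrary: v)
  case 0 then show ?case using Kbar_inj[OF r1] by simp
next
  case (Suc i)
  have KC: "Kbar q r nu (Suc i) z \<in> carrier_mat (Vd q r nu (Suc i)) (Vd q r nu (Suc (Suc i)))" by (rule Kbar_carrier[OF r1])
  have w: "Kbar q r nu (Suc i) z *\<^sub>v v \<in> carrier_vec (Vd q r nu (Suc i))" using KC Suc.prems(1) by simp
  have "Kprod q r nu i z *\<^sub>v (Kbar q r nu (Suc i) z *\<^sub>v v) = 0\<^sub>v (Vd q r nu 0)"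
    using Suc.prems assoc_mult_mat_vec[OF Kprod_carrier[OF r1] KC Suc.prems(1)] by simp
  then have "Kbar q r nu (Suc i) z *\<^sub>v v = 0\<^sub>v (Vd q r nu (Suc i))" using Suc.IH[OF w] by simp
  then show ?case using Kbar_inj[OF r1 Suc.prems(1)] by simp
qed


lemma mat_linear_map: fixes A :: "complex mat" assumes A: "A \<in> carrier_mat nr nc"
  shows "linear_map class_ring (module_vec TYPE(complex) nc) (module_vec TYPE(complex) nr) (\<lambda>v. A *\<^sub>v v)"
proof -
  interpret V: vec_space "TYPE(complex)" nc .
  interpret W: vec_space "TYPE(complex)" nr .
  show ?thesis
  proof (unfold linear_map_def, intro conjI)
    show "vectorspace class_ring (module_vec TYPE(complex) nc)" by (rule V.vectorspace_axioms)
    show "vectorspace class_ring (module_vec TYPE(complex) nr)" by (rule W.vectorspace_axioms)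
    show "mod_hom class_ring (module_vec TYPE(complex) nc) (module_vec TYPE(complex) nr) (\<lambda>v. A *\<^sub>v v)"
    proof (rule mod_hom.intro, unfold mod_hom_axioms_def)
      show "module class_ring (module_vec TYPE(complex) nc)" by (rule V.module_axioms)
      show "module class_ring (module_vec TYPE(complex) nr)" by (rule W.module_axioms)
      show "(\<lambda>v. A *\<^sub>v v) \<in> module_hom class_ring (module_vec TYPE(complex) nc) (module_vec TYPE(complex) nr)"
        unfolding module_hom_def using A
        by (auto simp: module_vec_simps mult_add_distrib_mat_vec mult_mat_vec)
    qed
  qed
qed

lemma mat_rank_nullity: fixes A :: "complex mat" assumes A: "A \<in> carrier_mat nr nc"
  shows "vec_space.rank nr A + kernel_dim A = nc"
proof -
  interpret V: vec_space "TYPE(complex)" nc .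
  interpret W: vec_space "TYPE(complex)" nr .
  interpret L: linear_map class_ring "module_vec TYPE(complex) nc" "module_vec TYPE(complex) nr" "\<lambda>v. A *\<^sub>v v"
    by (rule mat_linear_map[OF A])
  interpret K: kernel nr nc A by (unfold_locales, rule A)
  have rn: "vectorspace.dim class_ring (W.vs L.imT) + vectorspace.dim class_ring (V.vs L.kerT) = V.dim"
    by (rule L.rank_nullity) simp
  have im: "L.imT = W.span (set (cols A))"
    using W.col_space_eq[OF A] A unfolding W.col_space_def L.im_def by (auto simp: image_def)
  have ker: "L.kerT = mat_kernel A"
    using A unfolding L.ker_def mat_kernel_def by auto
  have "vec_space.rank nr A = vectorspace.dim class_ring (W.vs L.imT)"
    unfolding W.rank_def im by simp
  moreover have "kernel_dim A = vectorspace.dim class_ring (V.vs L.kerT)"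
    unfolding ker using A by (simp add: kernel_dim_def)
  moreover have "V.dim = nc" by (rule V.dim_is_n)
  ultimately show ?thesis using rn by simp
qed




lemma (in vec_space) rank_mono_span:
  assumes A: "A \<in> carrier_mat n a" and B: "B \<in> carrier_mat n b"
    and sub: "span (set (cols A)) \<subseteq> span (set (cols B))"
  shows "rank A \<le> rank B"
proof -
  let ?X = "span (set (cols A))" let ?Y = "span (set (cols B))"
  have cA: "set (cols A) \<subseteq> carrier_vec n" using A cols_dim carrier_matD(1) by (metis module_vec_simps(3))
  have cB: "set (cols B) \<subseteq> carrier_vec n" using B cols_dim carrier_matD(1) by (metis module_vec_simps(3))
  have sX: "subspace class_ring ?X V" by (rule span_is_subspace[OF cA])
  have sY: "subspace class_ring ?Y V" by (rule span_is_subspace[OF cB])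
  have vY: "vectorspace class_ring (vs ?Y)" by (rule subspace_is_vs[OF sY])
  have sXY: "subspace class_ring ?X (vs ?Y)" by (rule nested_subspaces[OF sY sX sub])
  have fY: "vectorspace.fin_dim class_ring (vs ?Y)" by (rule fin_dim_span_cols[OF B])
  have fX: "vectorspace.fin_dim class_ring ((vs ?Y)\<lparr>carrier := ?X\<rparr>)"
    using fin_dim_span_cols[OF A] by simp
  have "vectorspace.dim class_ring ((vs ?Y)\<lparr>carrier := ?X\<rparr>) \<le> vectorspace.dim class_ring (vs ?Y)"
    by (rule vectorspace.subspace_dim[OF vY sXY fY fX])
  then show ?thesis unfolding rank_def by simp
qed


lemma (in vectorspace) subspace_dim_full:
  assumes sX: "subspace K X V" and fin: "fin_dim" and fX: "vectorspace.fin_dim K (vs X)"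
    and d: "dim \<le> vectorspace.dim K (vs X)"
  shows "X = carrier V"
proof -
  have vX: "vectorspace K (vs X)" by (rule subspace_is_vs[OF sX])
  have smX: "submodule K X V" using sX unfolding subspace_def by simp
  have XV: "X \<subseteq> carrier V" using smX unfolding submodule_def by simp
  obtain b where fb: "finite b" and bb: "vectorspace.basis K (vs X) b"
    using vectorspace.finite_basis_exists[OF vX fX] by blast
  have bX: "b \<subseteq> X" and lib: "LinearCombinations.module.lin_indpt K (vs X) b" and genb: "LinearCombinations.module.span K (vs X) b = X"
    using bb unfolding vectorspace.basis_def[OF vX] by auto
  have li: "lin_indpt b" using lib span_li_not_depend(2)[OF bX smX] by simp
  have cb: "card b = vectorspace.dim K (vs X)" using vectorspace.dim_basis[OF vX fb bb] by simp
  have bV: "b \<subseteq> carrier V" using bX XV by auto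
  have "basis b" by (rule dim_li_is_basis[OF fin fb bV li]) (use cb d in simp)
  then have "span b = carrier V" unfolding basis_def by simp
  moreover have "span b \<subseteq> X" by (rule span_is_subset[OF bX smX])
  ultimately show ?thesis using XV by auto
qed


lemma mat_kernel_subspace: fixes N :: "complex mat" assumes N: "N \<in> carrier_mat nr nc"
  shows "subspace class_ring (mat_kernel N) (module_vec TYPE(complex) nc)"
proof -
  interpret NC: vec_space "TYPE(complex)" nc .
  show ?thesis unfolding subspace_def
  proof (intro conjI)
    show "vectorspace class_ring (module_vec TYPE(complex) nc)" by (rule NC.vectorspace_axioms)
    show "submodule class_ring (mat_kernel N) (module_vec TYPE(complex) nc)"
    proof (unfold submodule_def, intro conjI allI impI)
      show "module class_ring (module_vec TYPE(complex) nc)" by (rule NC.module_axioms)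
      show "mat_kernel N \<subseteq> carrier (module_vec TYPE(complex) nc)" using N by (auto simp: mat_kernel_def module_vec_simps)
    qed (use N in \<open>auto simp: mat_kernel_def module_vec_simps mult_add_distrib_mat_vec mult_mat_vec class_ring_simps\<close>)
  qed
qed

lemma kernel_span_eq:
  fixes N K :: "complex mat"
  assumes N: "N \<in> carrier_mat nr nc" and K: "K \<in> carrier_mat nc d" and NK: "N * K = 0\<^sub>m nr d"
    and rk: "kernel_dim N \<le> vec_space.rank nc K"
  shows "mat_kernel N = module.span class_ring (module_vec TYPE(complex) nc) (set (cols K))"
    "kernel_dim N = vec_space.rank nc K"
proof -
  interpret NC: vec_space "TYPE(complex)" nc .
  interpret Kr: kernel nr nc N by (unfold_locales, rule N)
  let ?X = "NC.span (set (cols K))"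
  have cK: "set (cols K) \<subseteq> carrier_vec nc" using K cols_dim carrier_matD(1) by (metis module_vec_simps(3))
  have XK: "?X \<subseteq> mat_kernel N"
  proof
    fix y assume "y \<in> ?X"
    then obtain x where x: "x \<in> carrier_vec d" and y: "y = K *\<^sub>v x" and yc: "y \<in> carrier_vec nc"
      using NC.col_space_eq[OF K] K unfolding NC.col_space_def by auto
    have "N *\<^sub>v y = (N * K) *\<^sub>v x" using y assoc_mult_mat_vec[OF N K x] by simp
    also have "\<dots> = 0\<^sub>v nr" using NK x by (auto intro!: eq_vecI simp: scalar_prod_def)
    finally show "y \<in> mat_kernel N" using yc N by (simp add: mat_kernel_def)
  qed
  have sX: "subspace class_ring ?X NC.V" by (rule NC.span_is_subspace[OF cK])
  have sKer: "subspace class_ring (mat_kernel N) NC.V" by (rule mat_kernel_subspace[OF N])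
  have sXK: "subspace class_ring ?X Kr.VK" using NC.nested_subspaces[OF sKer sX XK] by simp
  have finK: "Kr.Ker.fin_dim"
  proof -
    obtain B where "finite B" "Kr.basis B" using kernel_basis_exists[OF N] by blast
    then show ?thesis unfolding Kr.Ker.fin_dim_def Kr.Ker.basis_def by blast
  qed
  have finX: "vectorspace.fin_dim class_ring (Kr.VK\<lparr>carrier := ?X\<rparr>)"
    using NC.fin_dim_span_cols[OF K] by simp
  have le: "vectorspace.dim class_ring (Kr.VK\<lparr>carrier := ?X\<rparr>) \<le> Kr.dim"
    by (rule Kr.Ker.subspace_dim[OF sXK finK finX])
  have rkX: "vec_space.rank nc K = vectorspace.dim class_ring (Kr.VK\<lparr>carrier := ?X\<rparr>)"
    unfolding NC.rank_def by simp
  have kd: "kernel_dim N = Kr.dim" using N by (simp add: kernel_dim_def)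
  show "kernel_dim N = vec_space.rank nc K" using le rkX kd rk by simp
  have "?X = mat_kernel N"
    by (rule Kr.Ker.subspace_dim_full[OF sXK finK finX]) (use le rkX kd rk in simp)
  then show "mat_kernel N = module.span class_ring (module_vec TYPE(complex) nc) (set (cols K))" by simp
qed


lemma rank_full: fixes A :: "complex mat" assumes A: "A \<in> carrier_mat nr nc"
  and inj: "\<And>v. v \<in> carrier_vec nc \<Longrightarrow> A *\<^sub>v v = 0\<^sub>v nr \<Longrightarrow> v = 0\<^sub>v nc"
  shows "vec_space.rank nr A = nc"
proof -
  interpret V: vec_space "TYPE(complex)" nc .
  interpret L: linear_map class_ring "module_vec TYPE(complex) nc" "module_vec TYPE(complex) nr" "\<lambda>v. A *\<^sub>v v"
    by (rule mat_linear_map[OF A])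
  have ij: "inj_on (\<lambda>v. A *\<^sub>v v) (carrier (module_vec TYPE(complex) nc))"
  proof (rule inj_onI)
    fix v w assume v: "v \<in> carrier (module_vec TYPE(complex) nc)" and w: "w \<in> carrier (module_vec TYPE(complex) nc)"
      and e: "A *\<^sub>v v = A *\<^sub>v w"
    have v': "v \<in> carrier_vec nc" and w': "w \<in> carrier_vec nc" using v w by (auto simp: module_vec_simps)
    have "A *\<^sub>v (v - w) = A *\<^sub>v v - A *\<^sub>v w" using A v' w' by (simp add: mult_minus_distrib_mat_vec)
    also have "\<dots> = 0\<^sub>v nr" using e A w' by (simp add: minus_cancel_vec)
    finally have "v - w = 0\<^sub>v nc" using inj v' w' by simp
    then have vw: "v - w = 0\<^sub>v nc" .
    show "v = w"
    proof (rule eq_vecI)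
      show "dim_vec v = dim_vec w" using v' w' by simp
      fix i assume i: "i < dim_vec w"
      have "(v - w) $ i = 0" using vw i w' by simp
      then show "v $ i = w $ i" using i by simp
    qed
  qed
  have k0: "vectorspace.dim class_ring (V.vs L.kerT) = 0" by (rule L.inj_imp_dim_ker0[OF ij])
  have ker: "L.kerT = mat_kernel A" using A unfolding L.ker_def mat_kernel_def by (auto simp: module_vec_simps)
  have "kernel_dim A = 0" using k0 unfolding ker using A by (simp add: kernel_dim_def)
  then show ?thesis using mat_rank_nullity[OF A] by simp
qed

lemma tri_inj2:
  fixes A :: "complex mat"
  assumes A: "A \<in> carrier_mat nr nc" and v: "v \<in> carrier_vec nc" and Av: "A *\<^sub>v v = 0\<^sub>v nr"
    and rho: "\<And>c. c < nc \<Longrightarrow> rho c < nr"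
    and diag: "\<And>c. c < nc \<Longrightarrow> A $$ (rho c, c) = 1"
    and up: "\<And>c c'. c' < nc \<Longrightarrow> c < c' \<Longrightarrow> A $$ (rho c, c') = 0"
  shows "v = 0\<^sub>v nc"
proof -
  have main: "c < nc \<Longrightarrow> v $ c = 0" for c
  proof (induction c rule: less_induct)
    case (less c)
    have "0 = (A *\<^sub>v v) $ rho c" using Av rho[OF less.prems] by simp
    also have "\<dots> = (\<Sum>c'<nc. A $$ (rho c, c') * v $ c')"
      using A v rho[OF less.prems] by (auto simp: scalar_prod_def atLeast0LessThan intro!: sum.cong)
    also have "\<dots> = (\<Sum>c'<nc. if c' = c then v $ c else 0)"
    proof (intro sum.cong refl)
      fix c' assume c': "c' \<in> {..<nc}"
      show "A $$ (rho c, c') * v $ c' = (if c' = c then v $ c else 0)"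
      proof (cases "c' < c")
        case True then show ?thesis using less.IH[of c'] less.prems by simp
      next
        case False then show ?thesis using diag[OF less.prems] up[of c' c] c' by (cases "c' = c") auto
      qed
    qed
    also have "\<dots> = v $ c" using less.prems by (simp add: sum.delta')
    finally show "v $ c = 0" by simp
  qed
  show ?thesis by (rule eq_vecI) (use v main in auto)
qed

lemma rank_mult_le: fixes A B :: "complex mat"
  assumes A: "A \<in> carrier_mat nr n" and B: "B \<in> carrier_mat n nc"
  shows "vec_space.rank nr (A * B) \<le> vec_space.rank nr A"
proof -
  interpret W: vec_space "TYPE(complex)" nr .
  have AB: "A * B \<in> carrier_mat nr nc" using A B by simp
  show ?thesis
  proof (rule W.rank_mono_span[OF AB A])
    show "W.span (set (cols (A * B))) \<subseteq> W.span (set (cols A))"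
    proof
      fix y assume "y \<in> W.span (set (cols (A * B)))"
      then obtain x where x: "x \<in> carrier_vec nc" and y: "y = (A * B) *\<^sub>v x" and yc: "y \<in> carrier_vec nr"
        using W.col_space_eq[OF AB] AB unfolding W.col_space_def by auto
      have "y = A *\<^sub>v (B *\<^sub>v x)" using y assoc_mult_mat_vec[OF A B x] by simp
      moreover have "B *\<^sub>v x \<in> carrier_vec n" using B x by simp
      ultimately show "y \<in> W.span (set (cols A))"
        using W.col_space_eq[OF A] A yc unfolding W.col_space_def by auto
    qed
  qed
qed


context setting
begin

lemma Vd0: "Vd q r nu 0 = nu * r" using qle by (simp add: Vd_def algebra_simps)

lemma Nmat_carrier: "Nmat q r mu nu z \<in> carrier_mat (mu*q) (nu*r)" by (simp add: Nmat_def)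

lemma Nmat_mult: assumes B: "B \<in> carrier_mat (nu*r) d" and k: "k < mu" and i: "i < q" and c: "c < d"
  shows "(Nmat q r mu nu z * B) $$ (k*q+i, c) = (Nblk q r nu k z * B) $$ (i,c)"
proof -
  have p: "k*q+i < mu*q" using blk_less[OF k i] .
  have NB: "Nblk q r nu k z \<in> carrier_mat q (nu*r)" using Nblk_carrier[OF qle, of r k z] Vd0 by simp
  have "(Nmat q r mu nu z * B) $$ (k*q+i, c) = (\<Sum>x<nu*r. Nmat q r mu nu z $$ (k*q+i, x) * B $$ (x,c))"
    by (rule mult_index_sum[OF Nmat_carrier B p c])
  also have "\<dots> = (\<Sum>x<nu*r. Nblk q r nu k z $$ (i, x) * B $$ (x,c))"
    using p i by (intro sum.cong refl) (simp add: Nmat_def)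
  also have "\<dots> = (Nblk q r nu k z * B) $$ (i,c)" by (rule mult_index_sum[OF NB B i c, symmetric])
  finally show ?thesis .
qed

lemma row_dec: assumes "p < mu*q" shows "p = (p div q)*q + p mod q" "p div q < mu" "p mod q < q"
  using blk_dec[OF assms] by auto

lemma NK_zero: assumes mu0: "0 < mu"
  shows "Nmat q r mu nu z * Kprod q r nu (mu-1) z = 0\<^sub>m (mu*q) (Vd q r nu mu)"
proof -
  have KC: "Kprod q r nu (mu-1) z \<in> carrier_mat (nu*r) (Vd q r nu mu)"
    using Kprod_carrier[OF r1, of q nu "mu-1" z] Vd0 mu0 by simp
  show ?thesis
  proof (rule eq_matI)
    show "dim_row (Nmat q r mu nu z * Kprod q r nu (mu-1) z) = dim_row (0\<^sub>m (mu*q) (Vd q r nu mu))"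
      "dim_col (Nmat q r mu nu z * Kprod q r nu (mu-1) z) = dim_col (0\<^sub>m (mu*q) (Vd q r nu mu))"
      using KC by (auto simp: Nmat_def)
    fix p c assume "p < dim_row (0\<^sub>m (mu*q) (Vd q r nu mu))" "c < dim_col (0\<^sub>m (mu*q) (Vd q r nu mu))"
    then have p: "p < mu*q" and c: "c < Vd q r nu mu" by auto
    note d = row_dec[OF p]
    have "(Nmat q r mu nu z * Kprod q r nu (mu-1) z) $$ (p, c) = (Nblk q r nu (p div q) z * Kprod q r nu (mu-1) z) $$ (p mod q, c)"
      using Nmat_mult[OF KC d(2) d(3) c] d(1) by simp
    also have "\<dots> = 0" using part_i[of "p div q" "mu-1"] d c KC by simp
    finally show "(Nmat q r mu nu z * Kprod q r nu (mu-1) z) $$ (p, c) = 0\<^sub>m (mu*q) (Vd q r nu mu) $$ (p, c)"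
      using p c by simp
  qed
qed


definition KP :: "nat \<Rightarrow> complex mat" where
  "KP j = (if j = 0 then 1\<^sub>m (Vd q r nu 0) else Kprod q r nu (j-1) z)"

lemma KP_carrier: "KP j \<in> carrier_mat (nu*r) (Vd q r nu j)"
  using Kprod_carrier[OF r1, of q nu "j-1" z] Vd0 by (cases j) (auto simp: KP_def)

lemma NKP_ge: assumes "j \<le> k" "j \<le> r - 1" shows "Nblk q r nu k z * KP j = Phi q r nu j k z"
proof (cases j)
  case 0
  have NB: "Nblk q r nu k z \<in> carrier_mat q (Vd q r nu 0)" by (rule Nblk_carrier[OF qle])
  show ?thesis using 0 Phi0[of r q nu k z] r1 qle NB by (simp add: KP_def)
next
  case (Suc j') then show ?thesis using P1[of j' k] assms by (simp add: KP_def)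
qed

lemma NKP_lt: assumes "k < j" shows "Nblk q r nu k z * KP j = 0\<^sub>m q (Vd q r nu j)"
proof -
  obtain j' where j': "j = Suc j'" using assms by (cases j) auto
  have "dim_col (Kprod q r nu j' z) = Vd q r nu j" using Kprod_carrier[OF r1, of q nu j' z] j' by simp
  then show ?thesis using part_i[of k j'] assms j' by (simp add: KP_def)
qed

lemma rankN_ge: assumes mu0: "0 < mu"
  shows "q * min mu r \<le> vec_space.rank (mu*q) (Nmat q r mu nu z)"
proof -
  define m where "m = min mu r"
  define B where "B = mat (nu*r) (m*q) (\<lambda>(x,c). KP (c div q) $$ (x, (c mod q)*(r - c div q)))"
  have BC: "B \<in> carrier_mat (nu*r) (m*q)" by (simp add: B_def)
  have NC: "Nmat q r mu nu z \<in> carrier_mat (mu*q) (nu*r)" by (rule Nmat_carrier)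
  have NBC: "Nmat q r mu nu z * B \<in> carrier_mat (mu*q) (m*q)" using NC BC by simp
  have mq: "m*q \<le> mu*q" by (simp add: m_def)
  have entry: "(Nmat q r mu nu z * B) $$ (k*q+i, j*q+l) =
      (if k < j then 0 else of_nat ((k-j+l) choose l) * zt z (k-j+l) i)"
    if k: "k < mu" and i: "i < q" and j: "j < m" and l: "l < q" for k i j l
  proof -
    have c: "j*q+l < m*q" using blk_less[OF j l] .
    have jr: "j \<le> r - 1" "r - j > 0" using j m_def by auto
    have "l*(r-j) < q*(r-j)" using l jr by simp
    then have cc: "l*(r-j) < Vd q r nu j" unfolding Vd_def by linarith
    have "(Nmat q r mu nu z * B) $$ (k*q+i, j*q+l) = (Nblk q r nu k z * B) $$ (i, j*q+l)"
      by (rule Nmat_mult[OF BC k i c])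
    also have "\<dots> = (\<Sum>x<nu*r. Nblk q r nu k z $$ (i,x) * B $$ (x, j*q+l))"
      by (rule mult_index_sum[OF _ BC i c]) (use Nblk_carrier[OF qle, of r k z] Vd0 in simp)
    also have "\<dots> = (\<Sum>x<nu*r. Nblk q r nu k z $$ (i,x) * KP j $$ (x, l*(r-j)))"
      using c l by (intro sum.cong refl) (simp add: B_def)
    also have "\<dots> = (Nblk q r nu k z * KP j) $$ (i, l*(r-j))"
      by (rule mult_index_sum[symmetric, OF _ KP_carrier i cc]) (use Nblk_carrier[OF qle, of r k z] Vd0 in simp)
    also have "\<dots> = (if k < j then 0 else of_nat ((k-j+l) choose l) * zt z (k-j+l) i)"
    proof (cases "k < j")
      case True then show ?thesis using NKP_lt[OF True] i cc by simp
    next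
      case False
      then show ?thesis using NKP_ge[of j k] jr Phi_top[OF i l, of 0 r j nu k z] by simp
    qed
    finally show ?thesis .
  qed
  have inj: "v = 0\<^sub>v (m*q)" if v: "v \<in> carrier_vec (m*q)" and Nv: "(Nmat q r mu nu z * B) *\<^sub>v v = 0\<^sub>v (mu*q)" for v
  proof (rule tri_inj2[OF NBC v Nv, where rho="\<lambda>c. c"])
    fix c assume c: "c < m*q"
    then show "c < mu*q" using mq by linarith
    have d: "c = (c div q)*q + c mod q" "c div q < m" "c mod q < q" using blk_dec[OF c] by auto
    have k: "c div q < mu" using d(2) m_def by simp
    show "(Nmat q r mu nu z * B) $$ (c, c) = 1"
      using entry[OF k d(3) d(2) d(3)] d(1) by (simp add: zt_def)
  next
    fix c c' assume c': "c' < m*q" and cc: "c < c'"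
    then have c: "c < m*q" by simp
    have d: "c = (c div q)*q + c mod q" "c div q < m" "c mod q < q" using blk_dec[OF c] by auto
    have k: "c div q < mu" using d(2) m_def by simp
    have d': "c' = (c' div q)*q + c' mod q" "c' div q < m" "c' mod q < q" using blk_dec[OF c'] by auto
    have lx: "c div q < c' div q \<or> (c div q = c' div q \<and> c mod q < c' mod q)"
      using lex_less[of "c' mod q" q "c mod q" "c div q" "c' div q"] d d' cc by simp
    have "(Nmat q r mu nu z * B) $$ (c, c') = (if c div q < c' div q then 0 else of_nat ((c div q - c' div q + c' mod q) choose (c' mod q)) * zt z (c div q - c' div q + c' mod q) (c mod q))"
      using entry[OF k d(3) d'(2) d'(3)] d(1) d'(1) by simp
    also have "\<dots> = 0" using lx by (auto simp: zt_less)
    finally show "(Nmat q r mu nu z * B) $$ (c, c') = 0" .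
  qed
  have "vec_space.rank (mu*q) (Nmat q r mu nu z * B) = m*q" by (rule rank_full[OF NBC inj])
  moreover have "vec_space.rank (mu*q) (Nmat q r mu nu z * B) \<le> vec_space.rank (mu*q) (Nmat q r mu nu z)"
    by (rule rank_mult_le[OF NC BC])
  ultimately show ?thesis by (simp add: m_def mult.commute)
qed


lemma Vd_min: "Vd q r nu mu + q * min mu r = nu * r"
proof (cases "mu \<le> r")
  case True
  have a: "q*(r-mu) + q*mu = q*r" using True by (simp add: diff_mult_distrib2)
  have b: "q*r + (nu-q)*r = nu*r" using Vd0 by (simp add: Vd_def)
  have "Vd q r nu mu + q * min mu r = q*(r-mu) + (nu-q)*r + q*mu" using True by (simp add: Vd_def)
  then show ?thesis using a b by linarith
next
  case False
  then show ?thesis using Vd0 by (simp add: Vd_def min_def algebra_simps)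
qed

lemma main: assumes mu0: "0 < mu"
  shows "(\<forall>i k. k \<le> i \<longrightarrow>
            Nblk q r nu k z * Kprod q r nu i z = 0\<^sub>m q (dim_col (Kprod q r nu i z)))
       \<and> (mu \<le> r - 1 \<longrightarrow>
            Kprod q r nu (mu - 1) z \<in> carrier_mat (nu * r) (nu * r - q * mu)
          \<and> vec_space.rank (nu * r) (Kprod q r nu (mu - 1) z) = nu * r - q * mu)
       \<and> (r \<le> mu \<longrightarrow>
            Kprod q r nu (mu - 1) z \<in> carrier_mat (nu * r) ((nu - q) * r)
          \<and> vec_space.rank (nu * r) (Kprod q r nu (mu - 1) z) = (nu - q) * r)
       \<and> kernel_dim (Nmat q r mu nu z) = nu * r - q * min mu r
       \<and> mat_kernel (Nmat q r mu nu z) =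
            module.span class_ring (module_vec TYPE(complex) (nu * r))
              (set (cols (Kprod q r nu (mu - 1) z)))
       \<and> vec_space.rank (mu * q) (Nmat q r mu nu z) = q * min mu r
       \<and> q * min mu r < nu * r"
proof -
  let ?K = "Kprod q r nu (mu - 1) z" let ?N = "Nmat q r mu nu z"
  have KC: "?K \<in> carrier_mat (nu*r) (Vd q r nu mu)"
    using Kprod_carrier[OF r1, of q nu "mu-1" z] Vd0 mu0 by simp
  have rK: "vec_space.rank (nu*r) ?K = Vd q r nu mu"
  proof (rule rank_full[OF KC])
    fix v assume v: "v \<in> carrier_vec (Vd q r nu mu)" and Kv: "?K *\<^sub>v v = 0\<^sub>v (nu*r)"
    show "v = 0\<^sub>v (Vd q r nu mu)" using Kprod_inj[OF r1, where q=q and nu=nu and i="mu-1" and v=v and z=z] v Kv Vd0 mu0 by simp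
  qed
  have vm: "Vd q r nu mu = nu*r - q * min mu r" using Vd_min by (metis add_diff_cancel_right')
  have rN: "q * min mu r \<le> vec_space.rank (mu*q) ?N" by (rule rankN_ge[OF mu0])
  have rnN: "vec_space.rank (mu*q) ?N + kernel_dim ?N = nu*r" by (rule mat_rank_nullity[OF Nmat_carrier])
  have kle: "kernel_dim ?N \<le> vec_space.rank (nu*r) ?K" using rN rnN rK vm by linarith
  have NK: "?N * ?K = 0\<^sub>m (mu*q) (Vd q r nu mu)" by (rule NK_zero[OF mu0])
  note ke = kernel_span_eq[OF Nmat_carrier KC NK kle]
  have kd: "kernel_dim ?N = nu*r - q * min mu r" using ke(2) rK vm by simp
  have rankN: "vec_space.rank (mu*q) ?N = q * min mu r" using rnN kd Vd_min[of mu] by linarith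
  have lt: "q * min mu r < nu * r"
  proof -
    have "q * min mu r \<le> q * r" by simp
    also have "\<dots> < nu * r" using qnu r1 by simp
    finally show ?thesis .
  qed
  have c1: "mu \<le> r - 1 \<longrightarrow> Vd q r nu mu = nu * r - q * mu" using vm by (simp add: min_def)
  have c2: "r \<le> mu \<longrightarrow> Vd q r nu mu = (nu - q) * r" by (simp add: Vd_def)
  show ?thesis using part_i KC rK c1 c2 kd ke(1) rankN lt by auto
qed

end

theorem theorem5p8:
  fixes q r mu nu :: nat and z :: complex
  assumes "q > 0" and "r > 0" and "mu > 0" and "nu > 0"
    and "q + 1 \<le> nu" and "nu \<le> q + r - 1"
  shows "(\<forall>i k. k \<le> i \<longrightarrow>
            Nblk q r nu k z * Kprod q r nu i z = 0\<^sub>m q (dim_col (Kprod q r nu i z)))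
       \<and> (mu \<le> r - 1 \<longrightarrow>
            Kprod q r nu (mu - 1) z \<in> carrier_mat (nu * r) (nu * r - q * mu)
          \<and> vec_space.rank (nu * r) (Kprod q r nu (mu - 1) z) = nu * r - q * mu)
       \<and> (r \<le> mu \<longrightarrow>
            Kprod q r nu (mu - 1) z \<in> carrier_mat (nu * r) ((nu - q) * r)
          \<and> vec_space.rank (nu * r) (Kprod q r nu (mu - 1) z) = (nu - q) * r)
       \<and> kernel_dim (Nmat q r mu nu z) = nu * r - q * min mu r
       \<and> mat_kernel (Nmat q r mu nu z) =
            module.span class_ring (module_vec TYPE(complex) (nu * r))
              (set (cols (Kprod q r nu (mu - 1) z)))
       \<and> vec_space.rank (mu * q) (Nmat q r mu nu z) = q * min mu r
       \<and> q * min mu r < nu * r"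
proof -
  interpret setting q r nu z
    by unfold_locales (use assms in auto)
  show ?thesis by (rule main[OF assms(3)])
qed


end
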